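(* For any skew shape $\lambda/\mu$ (partitions $\mu\subseteq\lambda$) and any positive integer $n$, \[ s_{\lambda/\mu}\, s_n \;=\; s_{\lambda/\mu}\, h_n \;=\; \sum_{k=0}^{n} (-1)^k \sum_{\substack{\lambda^+/\lambda \ (n-k)\text{-horizontal strip}\\ \mu/\mu^- \ k\text{-vertical strip}}} s_{\lambda^+/\mu^-}, \] where the inner sum is over all pairs of partitions $\lambda^+,\mu^-$ such that $\lambda^+/\lambda$ is a horizontal strip of size $n-k$ and $\mu/\mu^-$ is a vertical strip of size $k$.
   Context: Symmetric functions are in variables $x=(x_1,x_2,\dots)$. For partitions $\mu\subseteq\lambda$, the skew Schur function is $s_{\lambda/\mu}=\sum_T x^T$, summed over semistandard Young tableaux $T$ of shape $\lambda/\mu$ (fillings with positive integers, weakly increasing along rows and strictly increasing along columns), where $x^T=\prod_i x_i^{(\text{number of entries } i)}$. $s_n=h_n$ is the complete homogeneous symmetric function. A skew shape $\alpha/\beta$ is a horizontal strip (resp. vertical strip) if no two of its cells lie in the same column (resp. row); a $k$-horizontal/vertical strip is one with $k$ cells (in particular $\alpha\supseteq\beta$ are partitions). *)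

theory Defs
  imports Main "HOL-Library.Poly_Mapping"
begin

(* Partitions: weakly decreasing sequences of naturals (row lengths, rows indexed from 0)
   with finitely many nonzero entries. *)
definition is_partition :: "(nat \<Rightarrow> nat) \<Rightarrow> bool" where
  "is_partition la \<longleftrightarrow> (\<forall>i j. i \<le> j \<longrightarrow> la j \<le> la i) \<and> finite {i. la i \<noteq> 0}"

definition part_subseteq :: "(nat \<Rightarrow> nat) \<Rightarrow> (nat \<Rightarrow> nat) \<Rightarrow> bool" where
  "part_subseteq mu la \<longleftrightarrow> (\<forall>i. mu i \<le> la i)"

definition skew_cells :: "(nat \<Rightarrow> nat) \<Rightarrow> (nat \<Rightarrow> nat) \<Rightarrow> (nat \<times> nat) set" where
  "skew_cells la mu = {(i, j). mu i \<le> j \<and> j < la i}"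

(* semistandard Young tableaux of shape la/mu, entries positive integers;
   T is extended by 0 outside the diagram *)
definition ssyt :: "(nat \<Rightarrow> nat) \<Rightarrow> (nat \<Rightarrow> nat) \<Rightarrow> (nat \<times> nat \<Rightarrow> nat) \<Rightarrow> bool" where
  "ssyt la mu T \<longleftrightarrow>
     (\<forall>c. c \<notin> skew_cells la mu \<longrightarrow> T c = 0) \<and>
     (\<forall>c \<in> skew_cells la mu. 1 \<le> T c) \<and>
     (\<forall>i j j'. (i, j) \<in> skew_cells la mu \<longrightarrow> (i, j') \<in> skew_cells la mu \<longrightarrow> j \<le> j' \<longrightarrow> T (i, j) \<le> T (i, j')) \<and>
     (\<forall>i i' j. (i, j) \<in> skew_cells la mu \<longrightarrow> (i', j) \<in> skew_cells la mu \<longrightarrow> i < i' \<longrightarrow> T (i, j) < T (i', j))"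

(* Symmetric functions (formal power series in x_1, x_2, ...) are represented by their
   coefficient function on monomials x^a, a :: nat \<Rightarrow>\<^sub>0 nat (Poly_Mapping.lookup a k = exponent of x_k). *)
type_synonym sfun = "(nat \<Rightarrow>\<^sub>0 nat) \<Rightarrow> int"

(* coefficient of x^a in s_{la/mu}: number of SSYT with content a *)
definition skew_schur :: "(nat \<Rightarrow> nat) \<Rightarrow> (nat \<Rightarrow> nat) \<Rightarrow> sfun" where
  "skew_schur la mu a = int (card {T. ssyt la mu T \<and>
       (\<forall>k. Poly_Mapping.lookup a k = card {c \<in> skew_cells la mu. T c = k})})"

(* complete homogeneous symmetric function h_n: sum of all monomials of degree n in x_1, x_2, ... *)
definition hsym :: "nat \<Rightarrow> sfun" where
  "hsym n a = (if Poly_Mapping.lookup a 0 = 0 \<and> (\<Sum>k\<in>Poly_Mapping.keys a. Poly_Mapping.lookup a k) = n then 1 else 0)"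

definition row_partition :: "nat \<Rightarrow> nat \<Rightarrow> nat" where
  "row_partition n = (\<lambda>i. if i = 0 then n else 0)"

definition empty_partition :: "nat \<Rightarrow> nat" where
  "empty_partition = (\<lambda>_. 0)"

definition sf_mult :: "sfun \<Rightarrow> sfun \<Rightarrow> sfun" where
  "sf_mult f g a = (\<Sum>(b, c) \<in> {(b, c). b + c = a}. f b * g c)"

definition horizontal_strip :: "(nat \<Rightarrow> nat) \<Rightarrow> (nat \<Rightarrow> nat) \<Rightarrow> nat \<Rightarrow> bool" where
  "horizontal_strip al be k \<longleftrightarrow> is_partition al \<and> is_partition be \<and> part_subseteq be al \<and>
     (\<forall>i i' j. (i, j) \<in> skew_cells al be \<longrightarrow> (i', j) \<in> skew_cells al be \<longrightarrow> i = i') \<and>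
     card (skew_cells al be) = k"

definition vertical_strip :: "(nat \<Rightarrow> nat) \<Rightarrow> (nat \<Rightarrow> nat) \<Rightarrow> nat \<Rightarrow> bool" where
  "vertical_strip al be k \<longleftrightarrow> is_partition al \<and> is_partition be \<and> part_subseteq be al \<and>
     (\<forall>i j j'. (i, j) \<in> skew_cells al be \<longrightarrow> (i, j') \<in> skew_cells al be \<longrightarrow> j = j') \<and>
     card (skew_cells al be) = k"

end

theory Submission
  imports Defs
begin

lemma part_mono: "is_partition f \<Longrightarrow> i \<le> j \<Longrightarrow> f j \<le> f i"
  unfolding is_partition_def by blast

lemma part_finite: "is_partition f \<Longrightarrow> finite {i. f i \<noteq> 0}"
  unfolding is_partition_def by blast

lemma partI:
  assumes "\<And>i. f (Suc i) \<le> f i" "finite {i. f i \<noteq> 0}"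
  shows "is_partition f"
  unfolding is_partition_def
proof (intro conjI allI impI)
  fix i j :: nat assume "i \<le> j" then show "f j \<le> f i" using lift_Suc_antimono_le[of f] assms(1) by metis
qed (rule assms(2))

lemma fin_supp_bound:
  fixes f :: "nat \<Rightarrow> nat"
  assumes "finite {i. f i \<noteq> (0::nat)}"
  obtains N where "\<And>i. N \<le> i \<Longrightarrow> f i = 0"
proof -
  have "\<exists>N. \<forall>i \<in> {i. f i \<noteq> 0}. i < N"
    using assms by (simp only: finite_nat_set_iff_bounded)
  then obtain N where N0: "\<forall>i \<in> {i. f i \<noteq> 0}. i < N" by blast
  then have N: "\<And>i. i \<in> {i. f i \<noteq> 0} \<Longrightarrow> i < N" by blast
  have "\<And>i. N \<le> i \<Longrightarrow> f i = 0"
  proof (rule ccontr)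
    fix i assume "N \<le> i" "f i \<noteq> 0" then show False using N[of i] by simp
  qed
  then show ?thesis using that by blast
qed

lemma part_bound:
  assumes "is_partition f" obtains N where "\<And>i. N \<le> i \<Longrightarrow> f i = 0"
  using fin_supp_bound part_finite[OF assms] by blast

lemma finite_below:
  fixes g :: "nat \<Rightarrow> nat"
  assumes "finite {i. g i \<noteq> 0}"
  shows "finite {f::nat\<Rightarrow>nat. \<forall>i. f i \<le> g i}"
proof -
  let ?S = "{i. g i \<noteq> 0}"
  let ?B = "{..Max (g ` ?S)}"
  have "{f::nat\<Rightarrow>nat. \<forall>i. f i \<le> g i} \<subseteq> {f. \<forall>x. (x \<in> ?S \<longrightarrow> f x \<in> ?B) \<and> (x \<notin> ?S \<longrightarrow> f x = 0)}"
  proof (intro subsetI CollectI allI conjI impI)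
    fix f :: "nat\<Rightarrow>nat" and x assume f: "f \<in> {f::nat\<Rightarrow>nat. \<forall>i. f i \<le> g i}" and x: "x \<in> ?S"
    have "g x \<le> Max (g ` ?S)" using assms x by simp
    moreover have "f x \<le> g x" using f by simp
    ultimately show "f x \<in> ?B" by simp
  next
    fix f :: "nat\<Rightarrow>nat" and x assume f: "f \<in> {f::nat\<Rightarrow>nat. \<forall>i. f i \<le> g i}" and x: "x \<notin> ?S"
    then show "f x = 0" by (metis (mono_tags) le_zero_eq mem_Collect_eq)
  qed
  moreover have "finite {f. \<forall>x. (x \<in> ?S \<longrightarrow> f x \<in> ?B) \<and> (x \<notin> ?S \<longrightarrow> f x = (0::nat))}"
    by (rule finite_set_of_finite_funs) (use assms in simp_all)
  ultimately show ?thesis by (rule finite_subset)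
qed

lemma skew_cells_finite:
  assumes "is_partition la" shows "finite (skew_cells la mu)"
proof -
  obtain N where N: "\<And>i. N \<le> i \<Longrightarrow> la i = 0" using part_bound[OF assms] by blast
  have "skew_cells la mu \<subseteq> {..<N} \<times> {..<la 0}"
  proof
    fix c assume "c \<in> skew_cells la mu"
    then obtain i j where c: "c = (i,j)" "mu i \<le> j" "j < la i" unfolding skew_cells_def by auto
    have "i < N"
    proof (rule ccontr)
      assume "\<not> i < N" then have "la i = 0" using N by simp
      then show False using c by simp
    qed
    moreover have "la i \<le> la 0" using part_mono[OF assms] by auto
    ultimately show "c \<in> {..<N} \<times> {..<la 0}" using c by auto
  qed
  then show ?thesis by (rule finite_subset) auto
qed

lemma card_cells_int:
  assumes "\<And>i. be i \<le> al i" "\<And>i. M \<le> i \<Longrightarrow> al i = 0"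
  shows "int (card (skew_cells al be)) = (\<Sum>i<M. int (al i) - int (be i))"
proof -
  have eq: "skew_cells al be = Sigma {..<M} (\<lambda>i. {be i..<al i})"
  proof
    show "skew_cells al be \<subseteq> Sigma {..<M} (\<lambda>i. {be i..<al i})"
    proof
      fix c assume "c \<in> skew_cells al be"
      then obtain i j where c: "c = (i,j)" "be i \<le> j" "j < al i" unfolding skew_cells_def by auto
      have "i < M"
      proof (rule ccontr)
        assume "\<not> i < M" then have "al i = 0" using assms(2) by simp
        then show False using c by simp
      qed
      then show "c \<in> Sigma {..<M} (\<lambda>i. {be i..<al i})" using c by simp
    qed
    show "Sigma {..<M} (\<lambda>i. {be i..<al i}) \<subseteq> skew_cells al be" unfolding skew_cells_def by auto
  qed
  have "card (skew_cells al be) = (\<Sum>i<M. al i - be i)"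
    unfolding eq by (subst card_SigmaI) auto
  then show ?thesis using assms(1) by (simp add: of_nat_diff)
qed

lemma sum_upd_int:
  fixes g :: "nat \<Rightarrow> int"
  assumes "i0 < M"
  shows "(\<Sum>i<M. g i) = (\<Sum>i<M. (if i = i0 then 0 else g i)) + g i0"
proof -
  have "(\<Sum>i<M. g i) = g i0 + (\<Sum>i\<in>{..<M} - {i0}. g i)"
    using assms by (subst sum.remove[of _ i0]) auto
  moreover have "(\<Sum>i<M. (if i = i0 then 0 else g i)) = (\<Sum>i\<in>{..<M} - {i0}. g i)"
    using assms by (subst sum.remove[of _ i0]) (auto intro!: sum.cong)
  ultimately show ?thesis by simp
qed

definition interl :: "(nat \<Rightarrow> nat) \<Rightarrow> (nat \<Rightarrow> nat) \<Rightarrow> bool" where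
  "interl al be \<longleftrightarrow> (\<forall>i. be i \<le> al i \<and> al (Suc i) \<le> be i)"

lemma interl_part_out:
  assumes "is_partition be" "interl al be" shows "is_partition al"
proof (rule partI)
  fix i
  have "al (Suc i) \<le> be i" "be i \<le> al i" using assms(2) unfolding interl_def by blast+
  then show "al (Suc i) \<le> al i" by simp
next
  have "{i. al i \<noteq> 0} \<subseteq> insert 0 (Suc ` {i. be i \<noteq> 0})"
  proof
    fix i assume i: "i \<in> {i. al i \<noteq> 0}"
    show "i \<in> insert 0 (Suc ` {i. be i \<noteq> 0})"
    proof (cases i)
      case (Suc k)
      have "al (Suc k) \<le> be k" using assms(2) unfolding interl_def by blast
      then have "be k \<noteq> 0" using i Suc by auto
      then show ?thesis using Suc by blast
    qed simp
  qed
  moreover have "finite (insert 0 (Suc ` {i. be i \<noteq> 0}))"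
    using part_finite[OF assms(1)] by blast
  ultimately show "finite {i. al i \<noteq> 0}" by (rule finite_subset)
qed

lemma interl_part_in:
  assumes "is_partition al" "interl al be" shows "is_partition be"
proof (rule partI)
  fix i
  have "be (Suc i) \<le> al (Suc i)" "al (Suc i) \<le> be i" using assms(2) unfolding interl_def by blast+
  then show "be (Suc i) \<le> be i" by simp
next
  have "{i. be i \<noteq> 0} \<subseteq> {i. al i \<noteq> 0}"
  proof
    fix i assume "i \<in> {i. be i \<noteq> 0}"
    moreover have "be i \<le> al i" using assms(2) unfolding interl_def by blast
    ultimately show "i \<in> {i. al i \<noteq> 0}" by auto
  qed
  then show "finite {i. be i \<noteq> 0}" using part_finite[OF assms(1)] by (rule finite_subset)
qed

lemma hs_char:
  "horizontal_strip al be k \<longleftrightarrow> is_partition be \<and> interl al be \<and> card (skew_cells al be) = k"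
proof
  assume h: "horizontal_strip al be k"
  then have pa: "is_partition al" and pb: "is_partition be" and sub: "\<And>i. be i \<le> al i"
    and col: "\<And>i i' j. (i, j) \<in> skew_cells al be \<Longrightarrow> (i', j) \<in> skew_cells al be \<Longrightarrow> i = i'"
    and ck: "card (skew_cells al be) = k"
    unfolding horizontal_strip_def part_subseteq_def by blast+
  have "al (Suc i) \<le> be i" for i
  proof (rule ccontr)
    assume "\<not> al (Suc i) \<le> be i"
    then have lt: "be i < al (Suc i)" by simp
    have "al (Suc i) \<le> al i" "be (Suc i) \<le> be i" using pa pb part_mono by auto
    then have "(i, be i) \<in> skew_cells al be" "(Suc i, be i) \<in> skew_cells al be"
      using lt unfolding skew_cells_def by auto
    then have "i = Suc i" by (rule col)
    then show False by simp
  qed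
  then have "interl al be" using sub unfolding interl_def by blast
  then show "is_partition be \<and> interl al be \<and> card (skew_cells al be) = k"
    using pb ck by blast
next
  assume h: "is_partition be \<and> interl al be \<and> card (skew_cells al be) = k"
  then have pb: "is_partition be" and il: "interl al be" and ck: "card (skew_cells al be) = k" by blast+
  have pa: "is_partition al" using interl_part_out[OF pb il] .
  have ilf: "\<And>i. be i \<le> al i" "\<And>i. al (Suc i) \<le> be i" using il unfolding interl_def by blast+
  have lt: False if "(i, j) \<in> skew_cells al be" "(i', j) \<in> skew_cells al be" "i < i'" for i i' j
  proof -
    have "al i' \<le> al (Suc i)" using part_mono[OF pa] that(3) by simp
    moreover have "al (Suc i) \<le> be i" by (rule ilf(2))
    moreover have "be i \<le> j" "j < al i'" using that(1,2) unfolding skew_cells_def by auto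
    ultimately show False by simp
  qed
  have col: "i = i'" if "(i, j) \<in> skew_cells al be" "(i', j) \<in> skew_cells al be" for i i' j
  proof (rule ccontr)
    assume "i \<noteq> i'"
    then consider "i < i'" | "i' < i" by linarith
    then show False
    proof cases
      case 1 then show False using lt that by blast
    next
      case 2 then show False using lt that by blast
    qed
  qed
  have "part_subseteq be al" unfolding part_subseteq_def using ilf(1) by blast
  then show "horizontal_strip al be k" unfolding horizontal_strip_def using pa pb col ck by blast
qed

lemma vs_char:
  "vertical_strip al be k \<longleftrightarrow> is_partition al \<and> is_partition be \<and> (\<forall>i. be i \<le> al i \<and> al i \<le> Suc (be i))
     \<and> card (skew_cells al be) = k"
proof
  assume h: "vertical_strip al be k"
  then have pa: "is_partition al" and pb: "is_partition be" and sub: "\<And>i. be i \<le> al i"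
    and row: "\<And>i j j'. (i, j) \<in> skew_cells al be \<Longrightarrow> (i, j') \<in> skew_cells al be \<Longrightarrow> j = j'"
    and ck: "card (skew_cells al be) = k"
    unfolding vertical_strip_def part_subseteq_def by blast+
  have "al i \<le> Suc (be i)" for i
  proof (rule ccontr)
    assume "\<not> al i \<le> Suc (be i)"
    then have "(i, be i) \<in> skew_cells al be" "(i, Suc (be i)) \<in> skew_cells al be"
      unfolding skew_cells_def by auto
    then have "be i = Suc (be i)" by (rule row)
    then show False by simp
  qed
  then show "is_partition al \<and> is_partition be \<and> (\<forall>i. be i \<le> al i \<and> al i \<le> Suc (be i))
     \<and> card (skew_cells al be) = k" using pa pb sub ck by blast
next
  assume h: "is_partition al \<and> is_partition be \<and> (\<forall>i. be i \<le> al i \<and> al i \<le> Suc (be i))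
     \<and> card (skew_cells al be) = k"
  have row: "j = j'" if "(i, j) \<in> skew_cells al be" "(i, j') \<in> skew_cells al be" for i j j'
  proof -
    have "al i \<le> Suc (be i)" using h by blast
    then show ?thesis using that unfolding skew_cells_def by auto
  qed
  have "part_subseteq be al" unfolding part_subseteq_def using h by blast
  then show "vertical_strip al be k" unfolding vertical_strip_def using h row by blast
qed

definition tabs :: "(nat \<Rightarrow> nat) \<Rightarrow> (nat \<Rightarrow> nat) \<Rightarrow> (nat \<Rightarrow> nat) \<Rightarrow> (nat \<times> nat \<Rightarrow> nat) set" where
  "tabs la mu p = {T. ssyt la mu T \<and> (\<forall>k. p k = card {c \<in> skew_cells la mu. T c = k})}"

definition SK :: "(nat \<Rightarrow> nat) \<Rightarrow> (nat \<Rightarrow> nat) \<Rightarrow> (nat \<Rightarrow> nat) \<Rightarrow> int" where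
  "SK la mu p = int (card (tabs la mu p))"

definition SK' :: "(nat \<Rightarrow> nat) \<Rightarrow> (nat \<Rightarrow> nat) \<Rightarrow> (nat \<Rightarrow> nat) \<Rightarrow> int" where
  "SK' la mu p = (if part_subseteq mu la then SK la mu p else 0)"

lemma cells_iff [simp]: "(i, j) \<in> skew_cells la mu \<longleftrightarrow> mu i \<le> j \<and> j < la i"
  unfolding skew_cells_def by auto

lemma entry_pos:
  assumes "T \<in> tabs la mu p" "c \<in> skew_cells la mu" "finite (skew_cells la mu)"
  shows "1 \<le> p (T c)"
proof -
  have "p (T c) = card {c' \<in> skew_cells la mu. T c' = T c}" using assms(1) unfolding tabs_def by blast
  moreover have "card {c' \<in> skew_cells la mu. T c' = T c} \<noteq> 0"
  proof -
    have "c \<in> {c' \<in> skew_cells la mu. T c' = T c}" using assms(2) by simp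
    moreover have "finite {c' \<in> skew_cells la mu. T c' = T c}" using assms(3) by simp
    ultimately show ?thesis by (metis card_0_eq empty_iff)
  qed
  ultimately show ?thesis by simp
qed

lemma tabs_finite:
  assumes "is_partition la" "\<And>i. m < i \<Longrightarrow> p i = 0"
  shows "finite (tabs la mu p)"
proof -
  let ?C = "skew_cells la mu"
  have fc: "finite ?C" using skew_cells_finite[OF assms(1)] .
  have "tabs la mu p \<subseteq> {T. \<forall>x. (x \<in> ?C \<longrightarrow> T x \<in> {..m}) \<and> (x \<notin> ?C \<longrightarrow> T x = 0)}"
  proof (intro subsetI CollectI allI conjI impI)
    fix T x assume T: "T \<in> tabs la mu p" and x: "x \<in> ?C"
    have "1 \<le> p (T x)" using entry_pos[OF T x fc] .
    then have "\<not> m < T x" using assms(2)[of "T x"] by auto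
    then show "T x \<in> {..m}" by simp
  next
    fix T x assume "T \<in> tabs la mu p" "x \<notin> ?C" then show "T x = 0" unfolding tabs_def ssyt_def by blast
  qed
  moreover have "finite {T. \<forall>x. (x \<in> ?C \<longrightarrow> T x \<in> {..m}) \<and> (x \<notin> ?C \<longrightarrow> T x = 0)}"
    by (rule finite_set_of_finite_funs) (use fc in auto)
  ultimately show ?thesis by (rule finite_subset)
qed

lemma SK'_zero:
  assumes "is_partition la" "is_partition mu"
  shows "SK' la mu (\<lambda>_. 0) = (if la = mu then 1 else 0)"
proof (cases "part_subseteq mu la")
  case False
  then have "la \<noteq> mu" unfolding part_subseteq_def by auto
  then show ?thesis using False unfolding SK'_def by simp
next
  case sub: True
  show ?thesis
  proof (cases "la = mu")
    case True
    have e: "skew_cells la mu = {}" using True unfolding skew_cells_def by auto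
    have "tabs la mu (\<lambda>_. 0) = {\<lambda>_. 0}"
      unfolding tabs_def ssyt_def e by auto
    then show ?thesis using True sub unfolding SK'_def SK_def by simp
  next
    case False
    have "\<exists>i. mu i \<noteq> la i" using False by (metis ext)
    then obtain i where "mu i \<noteq> la i" by blast
    then have c: "(i, mu i) \<in> skew_cells la mu" using sub unfolding part_subseteq_def
      by (simp add: le_neq_implies_less)
    have "tabs la mu (\<lambda>_. 0) = {}"
      using entry_pos[OF _ c skew_cells_finite[OF assms(1)]] by fastforce
    then show ?thesis using False sub unfolding SK'_def SK_def by simp
  qed
qed

lemma SK'_empty:
  "SK' empty_partition empty_partition q = (if q = (\<lambda>_. 0) then 1 else 0)"
proof -
  have e: "skew_cells empty_partition empty_partition = {}"
    unfolding skew_cells_def empty_partition_def by auto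
  have "tabs empty_partition empty_partition q = (if q = (\<lambda>_. 0) then {\<lambda>_. 0} else {})"
    unfolding tabs_def ssyt_def e by (auto simp: fun_eq_iff)
  then show ?thesis unfolding SK'_def SK_def part_subseteq_def by simp
qed

lemma upclosed_interval:
  fixes S :: "nat set"
  assumes "S \<subseteq> {a..<b}" "\<And>j j'. j \<in> S \<Longrightarrow> j \<le> j' \<Longrightarrow> j' < b \<Longrightarrow> j' \<in> S"
  shows "S = {b - card S..<b}"
proof (cases "S = {}")
  case True then show ?thesis by simp
next
  case False
  have fin: "finite S" using assms(1) finite_subset by blast
  define x where "x = Min S"
  have xS: "x \<in> S" using False fin x_def by simp
  have "S = {x..<b}"
  proof
    show "S \<subseteq> {x..<b}" using assms(1) fin x_def by auto
    show "{x..<b} \<subseteq> S" using assms(2) xS by auto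
  qed
  moreover then have "card S = b - x" by simp
  moreover have "x \<le> b" using xS assms(1) by auto
  ultimately show ?thesis by simp
qed

definition nuT :: "(nat \<Rightarrow> nat) \<Rightarrow> (nat \<Rightarrow> nat) \<Rightarrow> nat \<Rightarrow> (nat \<times> nat \<Rightarrow> nat) \<Rightarrow> nat \<Rightarrow> nat" where
  "nuT la mu m T = (\<lambda>i. la i - card {j. mu i \<le> j \<and> j < la i \<and> T (i, j) = m})"

definition strip :: "nat \<Rightarrow> (nat \<times> nat \<Rightarrow> nat) \<Rightarrow> (nat \<times> nat \<Rightarrow> nat)" where
  "strip m T = (\<lambda>c. if T c = m then 0 else T c)"

definition unstrip :: "(nat \<Rightarrow> nat) \<Rightarrow> nat \<Rightarrow> (nat \<Rightarrow> nat) \<Rightarrow> (nat \<times> nat \<Rightarrow> nat) \<Rightarrow> (nat \<times> nat \<Rightarrow> nat)" where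
  "unstrip la m nu T' = (\<lambda>c. if c \<in> skew_cells la nu then m else T' c)"

lemma T2_fwd:
  assumes pl: "is_partition la" and pmu: "is_partition mu" and sub: "part_subseteq mu la" and m1: "1 \<le> m"
    and pbig: "\<And>i. m < i \<Longrightarrow> p i = 0" and T: "T \<in> tabs la mu p"
  defines "nu \<equiv> nuT la mu m T"
  shows "horizontal_strip la nu (p m) \<and> part_subseteq mu nu \<and> strip m T \<in> tabs nu mu (p(m := 0))
     \<and> unstrip la m nu (strip m T) = T"
proof -
  have fc: "finite (skew_cells la mu)" using skew_cells_finite[OF pl] .
  have zero: "\<And>c. c \<notin> skew_cells la mu \<Longrightarrow> T c = 0"
    and pos: "\<And>c. c \<in> skew_cells la mu \<Longrightarrow> 1 \<le> T c"
    and row: "\<And>i j j'. (i, j) \<in> skew_cells la mu \<Longrightarrow> (i, j') \<in> skew_cells la mu \<Longrightarrow> j \<le> j' \<Longrightarrow> T (i, j) \<le> T (i, j')"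
    and col: "\<And>i i' j. (i, j) \<in> skew_cells la mu \<Longrightarrow> (i', j) \<in> skew_cells la mu \<Longrightarrow> i < i' \<Longrightarrow> T (i, j) < T (i', j)"
    and cont: "\<And>k. p k = card {c \<in> skew_cells la mu. T c = k}"
    using T unfolding tabs_def ssyt_def by blast+
  have le_m: "\<And>c. c \<in> skew_cells la mu \<Longrightarrow> T c \<le> m"
    using entry_pos[OF T _ fc] pbig by (metis leI not_one_le_zero)
  have mula: "\<And>i. mu i \<le> la i" using sub unfolding part_subseteq_def by blast
  define R where "R i = {j. mu i \<le> j \<and> j < la i \<and> T (i, j) = m}" for i
  have Rsub: "R i \<subseteq> {mu i..<la i}" for i unfolding R_def by auto
  have Req: "R i = {la i - card (R i)..<la i}" for i
  proof (rule upclosed_interval[OF Rsub])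
    fix j j' assume "j \<in> R i" "j \<le> j'" "j' < la i"
    then have "(i, j) \<in> skew_cells la mu" "(i, j') \<in> skew_cells la mu" "T (i, j) = m"
      unfolding R_def by auto
    then show "j' \<in> R i" using row[of i j j'] le_m[of "(i, j')"] \<open>j \<le> j'\<close> unfolding R_def by auto
  qed
  have Rcard: "card (R i) \<le> la i - mu i" for i
    using card_mono[OF _ Rsub[of i]] by simp
  have nu_eq: "nu i = la i - card (R i)" for i unfolding nu_def nuT_def R_def by simp
  have mu_nu: "mu i \<le> nu i" for i using Rcard[of i] mula[of i] nu_eq[of i] by linarith
  have nu_la: "nu i \<le> la i" for i using nu_eq[of i] by linarith
  have K1: "(i, j) \<in> skew_cells la nu \<longleftrightarrow> (i, j) \<in> skew_cells la mu \<and> T (i, j) = m" for i j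
  proof -
    have "(i, j) \<in> skew_cells la nu \<longleftrightarrow> j \<in> R i" using Req[of i] nu_eq[of i] by auto
    then show ?thesis unfolding R_def by auto
  qed
  have K2: "(i, j) \<in> skew_cells nu mu \<longleftrightarrow> (i, j) \<in> skew_cells la mu \<and> T (i, j) \<noteq> m" for i j
    using K1[of i j] nu_la[of i] mu_nu[of i] by auto
  have K1': "c \<in> skew_cells la nu \<longleftrightarrow> c \<in> skew_cells la mu \<and> T c = m" for c
    using K1 by (cases c) auto
  have K2': "c \<in> skew_cells nu mu \<longleftrightarrow> c \<in> skew_cells la mu \<and> T c \<noteq> m" for c
    using K2 by (cases c) auto
  have interl: "interl la nu"
    unfolding interl_def
  proof (intro allI conjI)
    fix i show "nu i \<le> la i" by (rule nu_la)
    show "la (Suc i) \<le> nu i"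
    proof (rule ccontr)
      assume a: "\<not> la (Suc i) \<le> nu i"
      have lai: "la (Suc i) \<le> la i" using part_mono[OF pl] by simp
      have c1: "(i, nu i) \<in> skew_cells la nu" using a lai by simp
      then have t1: "T (i, nu i) = m" "(i, nu i) \<in> skew_cells la mu" using K1 by blast+
      have "mu (Suc i) \<le> la (Suc i)" by (rule mula)
      have "mu (Suc i) \<le> mu i" using part_mono[OF pmu] by simp
      then have c2: "(Suc i, nu i) \<in> skew_cells la mu"
        using a mu_nu[of i] by simp
      show False using col[OF t1(2) c2] le_m[OF c2] t1(1) by simp
    qed
  qed
  have pnu: "is_partition nu" using interl_part_in[OF pl interl] .
  have cardnu: "card (skew_cells la nu) = p m"
  proof -
    have "skew_cells la nu = {c \<in> skew_cells la mu. T c = m}" using K1' by blast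
    then show ?thesis using cont[of m] by simp
  qed
  have hs: "horizontal_strip la nu (p m)" unfolding hs_char using pnu interl cardnu by blast
  have sub2: "part_subseteq mu nu" unfolding part_subseteq_def using mu_nu by blast
  have sT: "c \<in> skew_cells nu mu \<Longrightarrow> strip m T c = T c \<and> c \<in> skew_cells la mu" for c
    using K2'[of c] unfolding strip_def by simp
  have st: "strip m T \<in> tabs nu mu (p(m := 0))"
    unfolding tabs_def ssyt_def mem_Collect_eq
  proof (intro conjI allI impI ballI)
    fix c assume c: "c \<notin> skew_cells nu mu"
    show "strip m T c = 0"
    proof (cases "T c = m")
      case True then show ?thesis unfolding strip_def by simp
    next
      case False
      then have "c \<notin> skew_cells la mu" using K2'[of c] c by blast
      then show ?thesis using zero[of c] False unfolding strip_def by simp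
    qed
  next
    fix c assume "c \<in> skew_cells nu mu"
    then show "1 \<le> strip m T c" using sT[of c] pos[of c] by simp
  next
    fix i j j' assume a: "(i, j) \<in> skew_cells nu mu" "(i, j') \<in> skew_cells nu mu" "j \<le> j'"
    then show "strip m T (i, j) \<le> strip m T (i, j')" using sT[OF a(1)] sT[OF a(2)] row[of i j j'] by simp
  next
    fix i i' j assume a: "(i, j) \<in> skew_cells nu mu" "(i', j) \<in> skew_cells nu mu" "i < i'"
    then show "strip m T (i, j) < strip m T (i', j)" using sT[OF a(1)] sT[OF a(2)] col[of i j i'] by simp
  next
    fix k
    show "(p(m := 0)) k = card {c \<in> skew_cells nu mu. strip m T c = k}"
    proof (cases "k = m")
      case True
      have e: "{c \<in> skew_cells nu mu. strip m T c = k} = {}"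
      proof (rule equals0I)
        fix c assume "c \<in> {c \<in> skew_cells nu mu. strip m T c = k}"
        then have "c \<in> skew_cells nu mu" "strip m T c = k" by simp_all
        then show False using sT K2' True by metis
      qed
      show ?thesis unfolding e using True by simp
    next
      case False
      have e: "{c \<in> skew_cells nu mu. strip m T c = k} = {c \<in> skew_cells la mu. T c = k}"
      proof (rule set_eqI)
        fix c show "c \<in> {c \<in> skew_cells nu mu. strip m T c = k} \<longleftrightarrow> c \<in> {c \<in> skew_cells la mu. T c = k}"
          using K2'[of c] False unfolding strip_def by auto
      qed
      show ?thesis unfolding e using False cont[of k] by simp
    qed
  qed
  have un: "unstrip la m nu (strip m T) = T"
  proof
    fix c show "unstrip la m nu (strip m T) c = T c"
    proof (cases "c \<in> skew_cells la nu")
      case True then show ?thesis using K1'[of c] unfolding unstrip_def by simp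
    next
      case False
      have "T c \<noteq> m"
      proof
        assume "T c = m"
        then have "c \<in> skew_cells la mu" using zero[of c] m1 by (metis not_one_le_zero)
        then show False using False K1'[of c] \<open>T c = m\<close> by blast
      qed
      then show ?thesis using False unfolding unstrip_def strip_def by simp
    qed
  qed
  show ?thesis using hs sub2 st un by blast
qed

lemma T2_bwd:
  assumes pl: "is_partition la" and m1: "1 \<le> m"
    and pbig: "\<And>i. m < i \<Longrightarrow> p i = 0"
    and hs: "horizontal_strip la nu (p m)" and sub: "part_subseteq mu nu"
    and T': "T' \<in> tabs nu mu (p(m := 0))"
  defines "T \<equiv> unstrip la m nu T'"
  shows "T \<in> tabs la mu p \<and> nuT la mu m T = nu \<and> strip m T = T'"
proof -
  have pnu: "is_partition nu" and il: "interl la nu" and cardnu: "card (skew_cells la nu) = p m"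
    using hs_char[THEN iffD1, OF hs] by simp_all
  have colhs: "\<And>i i' j. (i, j) \<in> skew_cells la nu \<Longrightarrow> (i', j) \<in> skew_cells la nu \<Longrightarrow> i = i'"
    using hs unfolding horizontal_strip_def by blast
  have nula: "\<And>i. nu i \<le> la i" using il unfolding interl_def by blast
  have munu: "\<And>i. mu i \<le> nu i" using sub unfolding part_subseteq_def by blast
  have fc: "finite (skew_cells nu mu)" using skew_cells_finite[OF pnu] .
  have zero: "\<And>c. c \<notin> skew_cells nu mu \<Longrightarrow> T' c = 0"
    and pos: "\<And>c. c \<in> skew_cells nu mu \<Longrightarrow> 1 \<le> T' c"
    and row: "\<And>i j j'. (i, j) \<in> skew_cells nu mu \<Longrightarrow> (i, j') \<in> skew_cells nu mu \<Longrightarrow> j \<le> j' \<Longrightarrow> T' (i, j) \<le> T' (i, j')"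
    and col: "\<And>i i' j. (i, j) \<in> skew_cells nu mu \<Longrightarrow> (i', j) \<in> skew_cells nu mu \<Longrightarrow> i < i' \<Longrightarrow> T' (i, j) < T' (i', j)"
    and cont: "\<And>k. (p(m := 0)) k = card {c \<in> skew_cells nu mu. T' c = k}"
    using T' unfolding tabs_def ssyt_def by blast+
  have lt_m: "\<And>c. c \<in> skew_cells nu mu \<Longrightarrow> T' c < m"
  proof -
    fix c assume c: "c \<in> skew_cells nu mu"
    have "1 \<le> (p(m := 0)) (T' c)" by (rule entry_pos[OF T' c fc])
    then show "T' c < m" using pbig by (metis fun_upd_apply leI le_antisym not_one_le_zero)
  qed
  have Tla: "c \<in> skew_cells la nu \<Longrightarrow> T c = m" for c unfolding T_def unstrip_def by simp
  have Tnu: "c \<notin> skew_cells la nu \<Longrightarrow> T c = T' c" for c unfolding T_def unstrip_def by simp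
  have U: "c \<in> skew_cells la mu \<longleftrightarrow> c \<in> skew_cells la nu \<or> c \<in> skew_cells nu mu" for c
  proof (cases c)
    case (Pair i j)
    have "mu i \<le> nu i" "nu i \<le> la i" using nula munu by blast+
    then show ?thesis unfolding Pair cells_iff by linarith
  qed
  have D: "c \<in> skew_cells la nu \<Longrightarrow> c \<notin> skew_cells nu mu" for c by (cases c) simp
  have Tm: "T c = m \<longleftrightarrow> c \<in> skew_cells la nu" if c: "c \<in> skew_cells la mu" for c
  proof (cases "c \<in> skew_cells la nu")
    case True then show ?thesis using Tla by simp
  next
    case False
    then have "c \<in> skew_cells nu mu" using U c by blast
    then have "T' c < m" by (rule lt_m)
    then show ?thesis using Tnu[OF False] False by simp
  qed
  have ssyt: "ssyt la mu T"
    unfolding ssyt_def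
  proof (intro conjI allI impI ballI)
    fix c assume c: "c \<notin> skew_cells la mu"
    then have "c \<notin> skew_cells la nu" "c \<notin> skew_cells nu mu" using U by blast+
    then show "T c = 0" using Tnu zero by simp
  next
    fix c assume c: "c \<in> skew_cells la mu"
    show "1 \<le> T c"
    proof (cases "c \<in> skew_cells la nu")
      case True then show ?thesis using Tla m1 by simp
    next
      case False
      then have "c \<in> skew_cells nu mu" using U c by blast
      then show ?thesis using Tnu[OF False] pos by simp
    qed
  next
    fix i j j' assume a: "(i, j) \<in> skew_cells la mu" "(i, j') \<in> skew_cells la mu" "j \<le> j'"
    show "T (i, j) \<le> T (i, j')"
    proof (cases "(i, j') \<in> skew_cells la nu")
      case True
      have "T (i, j) \<le> m"
      proof (cases "(i, j) \<in> skew_cells la nu")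
        case True then show ?thesis using Tla by simp
      next
        case False
        then have "(i, j) \<in> skew_cells nu mu" using U a(1) by blast
        then show ?thesis using Tnu[OF False] lt_m by fastforce
      qed
      then show ?thesis using Tla[OF True] by simp
    next
      case False
      then have j': "(i, j') \<in> skew_cells nu mu" using U a(2) by blast
      then have j: "(i, j) \<in> skew_cells nu mu" using a by simp
      have "T (i, j) = T' (i, j)" "T (i, j') = T' (i, j')" using Tnu D j j' by blast+
      then show ?thesis using row[OF j j' a(3)] by simp
    qed
  next
    fix i i' j assume a: "(i, j) \<in> skew_cells la mu" "(i', j) \<in> skew_cells la mu" "i < i'"
    show "T (i, j) < T (i', j)"
    proof (cases "(i', j) \<in> skew_cells la nu")
      case True
      have ni: "(i, j) \<notin> skew_cells la nu"
      proof
        assume "(i, j) \<in> skew_cells la nu"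
        then have "i = i'" using colhs True by blast
        then show False using a(3) by simp
      qed
      then have "(i, j) \<in> skew_cells nu mu" using U a(1) by blast
      then have "T' (i, j) < m" by (rule lt_m)
      then show ?thesis using Tla[OF True] Tnu[OF ni] by simp
    next
      case False
      then have j': "(i', j) \<in> skew_cells nu mu" using U a(2) by blast
      have "nu i' \<le> nu i" using part_mono[OF pnu] a(3) by simp
      then have j: "(i, j) \<in> skew_cells nu mu" using a j' by simp
      have "T (i, j) = T' (i, j)" "T (i', j) = T' (i', j)" using Tnu D j j' by blast+
      then show ?thesis using col[OF j j' a(3)] by simp
    qed
  qed
  have contT: "p k = card {c \<in> skew_cells la mu. T c = k}" for k
  proof (cases "k = m")
    case True
    have e: "{c \<in> skew_cells la mu. T c = k} = skew_cells la nu"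
    proof (rule set_eqI)
      fix c show "c \<in> {c \<in> skew_cells la mu. T c = k} \<longleftrightarrow> c \<in> skew_cells la nu"
        using Tm[of c] U[of c] True by blast
    qed
    show ?thesis unfolding e using True cardnu by simp
  next
    case False
    have e: "{c \<in> skew_cells la mu. T c = k} = {c \<in> skew_cells nu mu. T' c = k}"
    proof (rule set_eqI)
      fix c
      show "c \<in> {c \<in> skew_cells la mu. T c = k} \<longleftrightarrow> c \<in> {c \<in> skew_cells nu mu. T' c = k}"
      proof
        assume "c \<in> {c \<in> skew_cells la mu. T c = k}"
        then have c: "c \<in> skew_cells la mu" "T c = k" by simp_all
        have n: "c \<notin> skew_cells la nu"
        proof
          assume "c \<in> skew_cells la nu" then have "T c = m" by (rule Tla)
          then show False using c(2) False by simp
        qed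
        then have "c \<in> skew_cells nu mu" using U c(1) by blast
        then show "c \<in> {c \<in> skew_cells nu mu. T' c = k}" using Tnu[OF n] c(2) by simp
      next
        assume "c \<in> {c \<in> skew_cells nu mu. T' c = k}"
        then have c: "c \<in> skew_cells nu mu" "T' c = k" by simp_all
        then have n: "c \<notin> skew_cells la nu" using D by blast
        have "c \<in> skew_cells la mu" using U c(1) by blast
        then show "c \<in> {c \<in> skew_cells la mu. T c = k}" using Tnu[OF n] c(2) by simp
      qed
    qed
    show ?thesis unfolding e using cont[of k] False by simp
  qed
  have inT: "T \<in> tabs la mu p" unfolding tabs_def using ssyt contT by blast
  have nuq: "nuT la mu m T = nu"
  proof
    fix i
    have e: "{j. mu i \<le> j \<and> j < la i \<and> T (i, j) = m} = {nu i..<la i}"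
    proof (rule set_eqI)
      fix j
      have mn: "mu i \<le> nu i" by (rule munu)
      show "j \<in> {j. mu i \<le> j \<and> j < la i \<and> T (i, j) = m} \<longleftrightarrow> j \<in> {nu i..<la i}"
      proof
        assume "j \<in> {j. mu i \<le> j \<and> j < la i \<and> T (i, j) = m}"
        then have "(i, j) \<in> skew_cells la mu" "T (i, j) = m" by simp_all
        then have "(i, j) \<in> skew_cells la nu" using Tm by blast
        then show "j \<in> {nu i..<la i}" by simp
      next
        assume "j \<in> {nu i..<la i}"
        then have j: "(i, j) \<in> skew_cells la nu" by simp
        then have "(i, j) \<in> skew_cells la mu" using U by blast
        then show "j \<in> {j. mu i \<le> j \<and> j < la i \<and> T (i, j) = m}" using Tla[OF j] by simp
      qed
    qed
    show "nuT la mu m T i = nu i" unfolding nuT_def e using nula[of i] by simp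
  qed
  have st: "strip m T = T'"
  proof
    fix c show "strip m T c = T' c"
    proof (cases "c \<in> skew_cells la nu")
      case True
      then have "T' c = 0" using zero D by blast
      then show ?thesis using Tla[OF True] unfolding strip_def by simp
    next
      case False
      have "T' c \<noteq> m"
      proof (cases "c \<in> skew_cells nu mu")
        case True then show ?thesis using lt_m[OF True] by simp
      next
        case False then show ?thesis using zero[OF False] m1 by simp
      qed
      then show ?thesis using Tnu[OF False] unfolding strip_def by simp
    qed
  qed
  show ?thesis using inT nuq st by blast
qed

lemma finite_HSP:
  assumes "is_partition la" shows "finite {nu. horizontal_strip la nu r}"
proof -
  have "{nu. horizontal_strip la nu r} \<subseteq> {f. \<forall>i. f i \<le> la i}"
  proof (intro subsetI CollectI allI)
    fix nu i assume "nu \<in> {nu. horizontal_strip la nu r}"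
    then have "part_subseteq nu la" unfolding horizontal_strip_def by simp
    then show "nu i \<le> la i" unfolding part_subseteq_def by simp
  qed
  then show ?thesis using finite_below[OF part_finite[OF assms]] by (rule finite_subset)
qed

lemma finite_VSD:
  assumes "is_partition mu" shows "finite {mm. vertical_strip mu mm k}"
proof -
  have "{mm. vertical_strip mu mm k} \<subseteq> {f. \<forall>i. f i \<le> mu i}"
  proof (intro subsetI CollectI allI)
    fix nu i assume "nu \<in> {mm. vertical_strip mu mm k}"
    then have "part_subseteq nu mu" unfolding vertical_strip_def by simp
    then show "nu i \<le> mu i" unfolding part_subseteq_def by simp
  qed
  then show ?thesis using finite_below[OF part_finite[OF assms]] by (rule finite_subset)
qed

lemma finite_HSU:
  assumes pl: "is_partition la" shows "finite {lp. horizontal_strip lp la s}"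
proof -
  define g where "g i = (if i = 0 then la 0 + s else la (i - 1))" for i
  have sub: "{i. g i \<noteq> 0} \<subseteq> insert 0 (Suc ` {i. la i \<noteq> 0})"
  proof
    fix i assume i: "i \<in> {i. g i \<noteq> 0}"
    show "i \<in> insert 0 (Suc ` {i. la i \<noteq> 0})"
    proof (cases i)
      case 0 then show ?thesis by simp
    next
      case (Suc k)
      then have "la k \<noteq> 0" using i unfolding g_def by simp
      then show ?thesis using Suc by blast
    qed
  qed
  have "finite (insert 0 (Suc ` {i. la i \<noteq> 0}))" using part_finite[OF pl] by simp
  then have fg: "finite {i. g i \<noteq> 0}" using sub by (rule rev_finite_subset)
  have "{lp. horizontal_strip lp la s} \<subseteq> {f. \<forall>i. f i \<le> g i}"
  proof (intro subsetI CollectI allI)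
    fix lp i assume "lp \<in> {lp. horizontal_strip lp la s}"
    then have h: "horizontal_strip lp la s" by (rule CollectD)
    have hc: "is_partition la \<and> interl lp la \<and> card (skew_cells lp la) = s"
      using hs_char[THEN iffD1, OF h] .
    then have il: "interl lp la" and c: "card (skew_cells lp la) = s" by simp_all
    have pl': "is_partition lp" by (rule interl_part_out[OF pl il])
    show "lp i \<le> g i"
    proof (cases i)
      case 0
      have ss: "{0} \<times> {la 0..<lp 0} \<subseteq> skew_cells lp la"
      proof
        fix c assume "c \<in> {0::nat} \<times> {la 0..<lp 0}"
        then obtain j where "c = (0, j)" "la 0 \<le> j" "j < lp 0" by auto
        then show "c \<in> skew_cells lp la" by simp
      qed
      have "card ({0::nat} \<times> {la 0..<lp 0}) \<le> card (skew_cells lp la)"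
        by (rule card_mono[OF skew_cells_finite[OF pl'] ss])
      then have "lp 0 - la 0 \<le> s" using c by (simp add: card_cartesian_product)
      then show ?thesis using 0 unfolding g_def by simp
    next
      case (Suc k)
      have "lp (Suc k) \<le> la k" using il unfolding interl_def by blast
      then show ?thesis using Suc unfolding g_def by simp
    qed
  qed
  then show ?thesis using finite_below[OF fg] by (rule finite_subset)
qed

lemma T2:
  assumes pl: "is_partition la" and pmu: "is_partition mu" and m1: "1 \<le> m"
    and pbig: "\<And>i. m < i \<Longrightarrow> p i = 0"
  shows "SK' la mu p = (\<Sum>nu\<in>{nu. horizontal_strip la nu (p m)}. SK' nu mu (p(m := 0)))"
proof (cases "part_subseteq mu la")
  case False
  have "SK' nu mu (p(m := 0)) = 0" if "horizontal_strip la nu (p m)" for nu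
  proof -
    have "\<not> part_subseteq mu nu"
      using that False unfolding horizontal_strip_def part_subseteq_def by (meson le_trans)
    then show ?thesis unfolding SK'_def by simp
  qed
  then show ?thesis using False unfolding SK'_def by simp
next
  case sub: True
  let ?p' = "p(m := 0)"
  let ?H = "{nu. horizontal_strip la nu (p m) \<and> part_subseteq mu nu}"
  have fH: "finite ?H" using finite_HSP[OF pl, of "p m"] by (rule rev_finite_subset) blast
  have pbig': "\<And>i. m < i \<Longrightarrow> ?p' i = 0" using pbig by simp
  have fT: "\<forall>nu\<in>?H. finite (tabs nu mu ?p')"
  proof
    fix nu assume "nu \<in> ?H"
    then have "is_partition nu" unfolding horizontal_strip_def by blast
    then show "finite (tabs nu mu ?p')" by (rule tabs_finite[of nu m ?p' mu]) (rule pbig')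
  qed
  have "(\<Sum>nu\<in>{nu. horizontal_strip la nu (p m)}. SK' nu mu ?p')
      = (\<Sum>nu\<in>{nu. horizontal_strip la nu (p m)}. if part_subseteq mu nu then SK nu mu ?p' else 0)"
    unfolding SK'_def by simp
  also have "\<dots> = (\<Sum>nu\<in>{nu \<in> {nu. horizontal_strip la nu (p m)}. part_subseteq mu nu}. SK nu mu ?p')"
    by (rule sum.inter_filter[OF finite_HSP[OF pl], symmetric])
  also have "{nu \<in> {nu. horizontal_strip la nu (p m)}. part_subseteq mu nu} = ?H" by simp
  also have "(\<Sum>nu\<in>?H. SK nu mu ?p') = int (\<Sum>nu\<in>?H. card (tabs nu mu ?p'))" unfolding SK_def by simp
  also have "\<dots> = int (card (Sigma ?H (\<lambda>nu. tabs nu mu ?p')))"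
    using card_SigmaI[OF fH fT] by simp
  finally have R: "(\<Sum>nu\<in>{nu. horizontal_strip la nu (p m)}. SK' nu mu ?p') = int (card (Sigma ?H (\<lambda>nu. tabs nu mu ?p')))" .
  have fwd: "horizontal_strip la (nuT la mu m T) (p m) \<and> part_subseteq mu (nuT la mu m T) \<and>
      strip m T \<in> tabs (nuT la mu m T) mu ?p' \<and> unstrip la m (nuT la mu m T) (strip m T) = T"
    if "T \<in> tabs la mu p" for T
    by (rule T2_fwd[of la mu m p T, OF pl pmu sub m1 pbig that])
  have bwd: "unstrip la m nu T' \<in> tabs la mu p \<and> nuT la mu m (unstrip la m nu T') = nu \<and> strip m (unstrip la m nu T') = T'"
    if "horizontal_strip la nu (p m)" "part_subseteq mu nu" "T' \<in> tabs nu mu ?p'" for nu T'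
    by (rule T2_bwd[of la m p nu mu T', OF pl m1 pbig that])
  have "bij_betw (\<lambda>T. (nuT la mu m T, strip m T)) (tabs la mu p) (Sigma ?H (\<lambda>nu. tabs nu mu ?p'))"
  proof (rule bij_betw_byWitness[where f' = "\<lambda>(nu, T'). unstrip la m nu T'"])
    show "\<forall>a\<in>tabs la mu p. (\<lambda>(nu, T'). unstrip la m nu T') (nuT la mu m a, strip m a) = a"
    proof
      fix a assume "a \<in> tabs la mu p" then show "(\<lambda>(nu, T'). unstrip la m nu T') (nuT la mu m a, strip m a) = a"
        using fwd[of a] by simp
    qed
    show "\<forall>a'\<in>Sigma ?H (\<lambda>nu. tabs nu mu ?p'). (nuT la mu m ((\<lambda>(nu, T'). unstrip la m nu T') a'), strip m ((\<lambda>(nu, T'). unstrip la m nu T') a')) = a'"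
    proof
      fix a' assume a': "a' \<in> Sigma ?H (\<lambda>nu. tabs nu mu ?p')"
      obtain nu T' where e: "a' = (nu, T')" by (cases a')
      have "horizontal_strip la nu (p m)" "part_subseteq mu nu" "T' \<in> tabs nu mu ?p'" using a' e by simp_all
      then show "(nuT la mu m ((\<lambda>(nu, T'). unstrip la m nu T') a'), strip m ((\<lambda>(nu, T'). unstrip la m nu T') a')) = a'"
        using bwd[of nu T'] e by simp
    qed
    show "(\<lambda>T. (nuT la mu m T, strip m T)) ` tabs la mu p \<subseteq> Sigma ?H (\<lambda>nu. tabs nu mu ?p')"
    proof
      fix x assume "x \<in> (\<lambda>T. (nuT la mu m T, strip m T)) ` tabs la mu p"
      then obtain T where T: "T \<in> tabs la mu p" "x = (nuT la mu m T, strip m T)" by blast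
      show "x \<in> Sigma ?H (\<lambda>nu. tabs nu mu ?p')" using fwd[OF T(1)] T(2) by simp
    qed
    show "(\<lambda>(nu, T'). unstrip la m nu T') ` Sigma ?H (\<lambda>nu. tabs nu mu ?p') \<subseteq> tabs la mu p"
    proof
      fix x assume "x \<in> (\<lambda>(nu, T'). unstrip la m nu T') ` Sigma ?H (\<lambda>nu. tabs nu mu ?p')"
      then obtain y where y: "y \<in> Sigma ?H (\<lambda>nu. tabs nu mu ?p')" "x = (\<lambda>(nu, T'). unstrip la m nu T') y"
        by (rule imageE)
      obtain nu T' where ye: "y = (nu, T')" by (cases y)
      have a: "nu \<in> ?H" "T' \<in> tabs nu mu ?p'" "x = unstrip la m nu T'" using y ye by auto
      show "x \<in> tabs la mu p" using bwd[of nu T'] a by simp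
    qed
  qed
  then have "card (tabs la mu p) = card (Sigma ?H (\<lambda>nu. tabs nu mu ?p'))" by (rule bij_betw_same_card)
  then show ?thesis using R sub unfolding SK'_def SK_def by simp
qed

lemma sum_involution_zero:
  fixes f :: "'a \<Rightarrow> int"
  assumes "\<And>x. x \<in> U \<Longrightarrow> g x \<in> U" "\<And>x. x \<in> U \<Longrightarrow> g (g x) = x" "\<And>x. x \<in> U \<Longrightarrow> f (g x) = - f x"
  shows "sum f U = 0"
proof -
  have "sum f U = sum (\<lambda>x. f (g x)) U"
    by (rule sum.reindex_bij_witness[where i = g and j = g]) (use assms in auto)
  also have "\<dots> = sum (\<lambda>x. - f x) U" using assms(3) by (rule sum.cong[OF refl])
  also have "\<dots> = - sum f U" by (simp add: sum_negf)
  finally show ?thesis by simp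
qed

lemma cells_empty_eq:
  assumes "\<And>i. be i \<le> al i" "skew_cells al be = {}" shows "al = be"
proof
  fix i show "al i = be i"
  proof (rule ccontr)
    assume "al i \<noteq> be i"
    then have "(i, be i) \<in> skew_cells al be" using assms(1)[of i] unfolding skew_cells_def by auto
    then show False using assms(2) by simp
  qed
qed

lemma hs0: "horizontal_strip al be 0 \<Longrightarrow> al = be"
proof -
  assume h: "horizontal_strip al be 0"
  then have "is_partition al" "\<And>i. be i \<le> al i" "card (skew_cells al be) = 0"
    unfolding horizontal_strip_def part_subseteq_def by blast+
  then show "al = be" using cells_empty_eq skew_cells_finite by (metis card_0_eq)
qed

lemma vs0: "vertical_strip al be 0 \<Longrightarrow> al = be"
proof -
  assume h: "vertical_strip al be 0"
  then have "is_partition al" "\<And>i. be i \<le> al i" "card (skew_cells al be) = 0"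
    unfolding vertical_strip_def part_subseteq_def by blast+
  then show "al = be" using cells_empty_eq skew_cells_finite by (metis card_0_eq)
qed

lemma cells_self: "skew_cells la la = {}" unfolding skew_cells_def by auto

lemma hs_refl: "is_partition la \<Longrightarrow> horizontal_strip la la 0"
  unfolding horizontal_strip_def part_subseteq_def cells_self by simp

lemma vs_refl: "is_partition la \<Longrightarrow> vertical_strip la la 0"
  unfolding vertical_strip_def part_subseteq_def cells_self by simp

lemma L1:
  assumes pl: "is_partition la" and pmu: "is_partition mu"
  shows "(\<Sum>k = 0..n. (-1::int) ^ k * int (card {rho. horizontal_strip rho la (n - k) \<and> vertical_strip mu rho k}))
        = (if n = 0 \<and> la = mu then 1 else 0)"
proof (cases "n = 0")
  case True
  have "{rho. horizontal_strip rho la 0 \<and> vertical_strip mu rho 0} = (if la = mu then {la} else {})"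
    using hs0 vs0 hs_refl[OF pl] vs_refl[OF pl] by auto
  then show ?thesis using True by simp
next
  case False
  let ?S = "\<lambda>k. {rho. horizontal_strip rho la (n - k) \<and> vertical_strip mu rho k}"
  let ?U = "Sigma {0..n} ?S"
  have fS: "finite (?S k)" for k
  proof -
    have "?S k \<subseteq> {f. \<forall>i. f i \<le> mu i}" unfolding vertical_strip_def part_subseteq_def by blast
    then show ?thesis using finite_below[OF part_finite[OF pmu]] by (rule finite_subset)
  qed
  have "(\<Sum>k = 0..n. (-1::int) ^ k * int (card (?S k))) = (\<Sum>k = 0..n. \<Sum>rho\<in>?S k. (-1::int) ^ k)"
    by (simp add: mult.commute)
  also have "\<dots> = (\<Sum>x\<in>?U. (-1::int) ^ fst x)"
    by (subst sum.Sigma) (use fS in \<open>auto simp: case_prod_beta\<close>)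
  also have "\<dots> = 0"
  proof (cases "?U = {}")
    case True then show ?thesis by simp
  next
    case ne: False
    then obtain k0 rho0 where x0: "k0 \<le> n" "horizontal_strip rho0 la (n - k0)" "vertical_strip mu rho0 k0" by auto
    have lamu: "la i \<le> mu i" for i
      using x0 unfolding horizontal_strip_def vertical_strip_def part_subseteq_def by (meson le_trans)
    have "la \<noteq> mu"
    proof
      assume e: "la = mu"
      have "la \<le> rho0" "rho0 \<le> mu"
        using x0 unfolding horizontal_strip_def vertical_strip_def part_subseteq_def le_fun_def by blast+
      then have r: "rho0 = la" using e by simp
      have "n - k0 = 0" using x0(2) unfolding r horizontal_strip_def cells_self by simp
      moreover have "k0 = 0" using x0(3) unfolding r e vertical_strip_def cells_self by simp
      ultimately show False using False x0(1) by simp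
    qed
    then have ex: "\<exists>i. la i < mu i" using lamu by (metis ext le_neq_implies_less)
    define i0 where "i0 = (LEAST i. la i < mu i)"
    have i0: "la i0 < mu i0" using LeastI_ex[OF ex] unfolding i0_def .
    have below: "la i = mu i" if "i < i0" for i
      using not_less_Least[OF that[unfolded i0_def]] lamu[of i] by simp
    obtain M where M: "\<And>i. M \<le> i \<Longrightarrow> mu i = 0" using part_bound[OF pmu] by blast
    have i0M: "i0 < M"
    proof (rule ccontr)
      assume "\<not> i0 < M" then have "mu i0 = 0" using M[of i0] by simp
      then show False using i0 by simp
    qed
    define g where "g x = (if snd x i0 = mu i0 then (Suc (fst x), (snd x)(i0 := mu i0 - 1))
                          else (fst x - 1, (snd x)(i0 := mu i0)))" for x :: "nat \<times> (nat \<Rightarrow> nat)"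
    have key: "g x \<in> ?U \<and> g (g x) = x \<and> (-1::int) ^ fst (g x) = - ((-1) ^ fst x)" if x: "x \<in> ?U" for x
    proof -
      obtain k rho where xe: "x = (k, rho)" by (cases x)
      have kn: "k \<le> n" and hs: "horizontal_strip rho la (n - k)" and vs: "vertical_strip mu rho k"
        using x xe by auto
      have il: "interl rho la" and c1: "card (skew_cells rho la) = n - k"
        using hs_char[THEN iffD1, OF hs] by simp_all
      have prho: "is_partition rho" and vb: "\<And>i. rho i \<le> mu i \<and> mu i \<le> Suc (rho i)"
        and c2: "card (skew_cells mu rho) = k" using vs_char[THEN iffD1, OF vs] by simp_all
      have larho: "\<And>i. la i \<le> rho i" using il unfolding interl_def by blast
      have rhoM: "\<And>i. M \<le> i \<Longrightarrow> rho i = 0" using M vb by (metis le_zero_eq)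
      have s1: "int (n - k) = (\<Sum>i<M. int (rho i) - int (la i))"
        using card_cells_int[of la rho M] larho rhoM c1 by simp
      have s2: "int k = (\<Sum>i<M. int (mu i) - int (rho i))"
        using card_cells_int[of rho mu M] vb M c2 by simp
      have mu1: "1 \<le> mu i0" using i0 by simp
      have upd: "horizontal_strip (rho(i0 := v)) la (nat (int (n - k) + (int v - int (rho i0))))
             \<and> vertical_strip mu (rho(i0 := v)) (nat (int k - (int v - int (rho i0))))
             \<and> int (n - k) + (int v - int (rho i0)) \<ge> 0 \<and> int k - (int v - int (rho i0)) \<ge> 0"
        if v1: "mu i0 - 1 \<le> v" and v2: "v \<le> mu i0" for v
      proof -
        let ?r = "rho(i0 := v)"
        have il': "interl ?r la" unfolding interl_def
        proof (intro allI conjI)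
          fix i
          show "la i \<le> ?r i" using larho[of i] v1 i0 by auto
          show "?r (Suc i) \<le> la i"
          proof (cases "Suc i = i0")
            case True
            have "mu i0 \<le> mu i" using part_mono[OF pmu] True by simp
            then show ?thesis using True below[of i] v2 by simp
          next
            case False then show ?thesis using il unfolding interl_def by simp
          qed
        qed
        have pr': "is_partition ?r" using interl_part_out[OF pl il'] .
        have vb': "\<And>i. ?r i \<le> mu i \<and> mu i \<le> Suc (?r i)" using vb v1 v2 by auto
        have rM': "\<And>i. M \<le> i \<Longrightarrow> ?r i = 0" using rhoM i0M by auto
        have la': "\<And>i. la i \<le> ?r i" using il' unfolding interl_def by blast
        have t1: "int (card (skew_cells ?r la)) = (\<Sum>i<M. int (?r i) - int (la i))"
          using card_cells_int[of la ?r M] la' rM' by simp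
        have t2: "int (card (skew_cells mu ?r)) = (\<Sum>i<M. int (mu i) - int (?r i))"
          using card_cells_int[of ?r mu M] vb' M by simp
        have f1: "(\<lambda>i. if i = i0 then 0 else int (?r i) - int (la i)) = (\<lambda>i. if i = i0 then 0 else int (rho i) - int (la i))"
          by (rule ext) simp
        have f2: "(\<lambda>i. if i = i0 then 0 else int (mu i) - int (?r i)) = (\<lambda>i. if i = i0 then 0 else int (mu i) - int (rho i))"
          by (rule ext) simp
        have e1: "(\<Sum>i<M. int (?r i) - int (la i)) = (\<Sum>i<M. int (rho i) - int (la i)) + (int v - int (rho i0))"
          using sum_upd_int[OF i0M, of "\<lambda>i. int (?r i) - int (la i)"] sum_upd_int[OF i0M, of "\<lambda>i. int (rho i) - int (la i)"]
          unfolding f1 by simp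
        have e2: "(\<Sum>i<M. int (mu i) - int (?r i)) = (\<Sum>i<M. int (mu i) - int (rho i)) - (int v - int (rho i0))"
          using sum_upd_int[OF i0M, of "\<lambda>i. int (mu i) - int (?r i)"] sum_upd_int[OF i0M, of "\<lambda>i. int (mu i) - int (rho i)"]
          unfolding f2 by simp
        have c1': "card (skew_cells ?r la) = nat (int (n - k) + (int v - int (rho i0)))"
          using t1 e1 s1 by simp
        have c2': "card (skew_cells mu ?r) = nat (int k - (int v - int (rho i0)))"
          using t2 e2 s2 by simp
        have "horizontal_strip ?r la (nat (int (n - k) + (int v - int (rho i0))))"
          unfolding hs_char using pl il' c1' by blast
        moreover have "vertical_strip mu ?r (nat (int k - (int v - int (rho i0))))"
          unfolding vs_char using pmu pr' vb' c2' by blast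
        moreover have "int (n - k) + (int v - int (rho i0)) \<ge> 0" using t1 e1 s1 by simp
        moreover have "int k - (int v - int (rho i0)) \<ge> 0" using t2 e2 s2 by simp
        ultimately show ?thesis by blast
      qed
      show ?thesis
      proof (cases "rho i0 = mu i0")
        case True
        have gx: "g x = (Suc k, rho(i0 := mu i0 - 1))" unfolding g_def xe using True by simp
        have u: "horizontal_strip (rho(i0 := mu i0 - 1)) la (nat (int (n - k) + (int (mu i0 - 1) - int (rho i0))))
             \<and> vertical_strip mu (rho(i0 := mu i0 - 1)) (nat (int k - (int (mu i0 - 1) - int (rho i0))))
             \<and> int (n - k) + (int (mu i0 - 1) - int (rho i0)) \<ge> 0"
          using upd[of "mu i0 - 1"] by simp
        have d: "int (mu i0 - 1) - int (rho i0) = -1" using True mu1 by simp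
        have kn': "Suc k \<le> n" using u d kn by simp
        have n1: "nat (int (n - k) + (int (mu i0 - 1) - int (rho i0))) = n - Suc k" using d kn' by simp
        have n2: "nat (int k - (int (mu i0 - 1) - int (rho i0))) = Suc k" using d by simp
        have mem: "g x \<in> ?U" using gx u kn' n1 n2 by simp
        have gg: "g (g x) = x"
        proof -
          have "(rho(i0 := mu i0 - 1)) i0 \<noteq> mu i0" using mu1 by simp
          then have "g (Suc k, rho(i0 := mu i0 - 1)) = (k, rho(i0 := mu i0))" unfolding g_def by simp
          then have "g (g x) = (k, rho(i0 := mu i0))" by (simp only: gx)
          also have "rho(i0 := mu i0) = rho" using True by auto
          finally show ?thesis using xe by simp
        qed
        show ?thesis using mem gg gx xe by simp
      next
        case False
        then have r0: "rho i0 = mu i0 - 1" using vb[of i0] by linarith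
        have gx: "g x = (k - 1, rho(i0 := mu i0))" unfolding g_def xe using False by simp
        have u: "horizontal_strip (rho(i0 := mu i0)) la (nat (int (n - k) + (int (mu i0) - int (rho i0))))
             \<and> vertical_strip mu (rho(i0 := mu i0)) (nat (int k - (int (mu i0) - int (rho i0))))
             \<and> int k - (int (mu i0) - int (rho i0)) \<ge> 0"
          using upd[of "mu i0"] by simp
        have d: "int (mu i0) - int (rho i0) = 1" using r0 mu1 by simp
        have k1: "1 \<le> k" using u d by simp
        have n1: "nat (int (n - k) + (int (mu i0) - int (rho i0))) = n - (k - 1)" using d k1 kn by simp
        have n2: "nat (int k - (int (mu i0) - int (rho i0))) = k - 1" using d k1 by simp
        have mem: "g x \<in> ?U" using gx u kn n1 n2 by simp
        have gg: "g (g x) = x"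
        proof -
          have "(rho(i0 := mu i0)) i0 = mu i0" by simp
          then have "g (k - 1, rho(i0 := mu i0)) = (Suc (k - 1), rho(i0 := mu i0 - 1))" unfolding g_def by simp
          then have "g (g x) = (Suc (k - 1), rho(i0 := mu i0 - 1))" by (simp only: gx)
          also have "rho(i0 := mu i0 - 1) = rho" using r0 by auto
          finally show ?thesis using xe k1 by simp
        qed
        have sg: "(-1::int) ^ (k - 1) = - ((-1) ^ k)"
        proof -
          have "(-1::int) ^ k = (-1) ^ Suc (k - 1)" using k1 by simp
          then show ?thesis by simp
        qed
        show ?thesis using mem gg gx xe sg by simp
      qed
    qed
    show ?thesis by (rule sum_involution_zero[where g = g]) (use key in blast)+
  qed
  finally show ?thesis using False by simp
qed

lemma shift_sum_int:
  fixes f :: "nat \<Rightarrow> int"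
  assumes "f N = 0"
  shows "(\<Sum>j<N. f (Suc j)) = (\<Sum>i<N. f i) - f 0"
proof -
  have "(\<Sum>i<Suc N. f i) = f 0 + (\<Sum>j<N. f (Suc j))" by (rule sum.lessThan_Suc_shift)
  moreover have "(\<Sum>i<Suc N. f i) = (\<Sum>i<N. f i) + f N" by simp
  ultimately show ?thesis using assms by simp
qed

lemma L2_common:
  fixes la rho :: "nat \<Rightarrow> nat"
  assumes pl: "is_partition la" and pr: "is_partition rho"
  obtains N where "\<And>i. N \<le> i \<Longrightarrow> la i = 0" "\<And>i. N \<le> i \<Longrightarrow> rho i = 0"
proof -
  obtain N1 where N1: "\<And>i. N1 \<le> i \<Longrightarrow> la i = 0" using part_bound[OF pl] by blast
  obtain N2 where N2: "\<And>i. N2 \<le> i \<Longrightarrow> rho i = 0" using part_bound[OF pr] by blast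
  show ?thesis using that[of "max N1 N2"] N1 N2 by simp
qed

definition Lnu :: "(nat \<Rightarrow> nat) \<Rightarrow> (nat \<Rightarrow> nat) \<Rightarrow> (nat \<Rightarrow> nat) \<Rightarrow> nat \<Rightarrow> nat" where
  "Lnu la rho lp = (\<lambda>i. max (la (Suc i)) (rho (Suc i)) + min (la i) (rho i) - lp (Suc i))"

definition Llp :: "(nat \<Rightarrow> nat) \<Rightarrow> (nat \<Rightarrow> nat) \<Rightarrow> nat \<Rightarrow> (nat \<Rightarrow> nat) \<Rightarrow> nat \<Rightarrow> nat" where
  "Llp la rho t nu = (\<lambda>i. if i = 0 then max (la 0) (rho 0) + t
        else max (la i) (rho i) + min (la (i - 1)) (rho (i - 1)) - nu (i - 1))"

lemma L2_fwd:
  assumes pl: "is_partition la" and h1: "horizontal_strip lp la s" and h2: "horizontal_strip lp rho r"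
  defines "t \<equiv> lp 0 - max (la 0) (rho 0)"
  defines "nu \<equiv> Lnu la rho lp"
  shows "t \<le> r \<and> t \<le> s \<and> horizontal_strip la nu (r - t) \<and> horizontal_strip rho nu (s - t)
     \<and> Llp la rho t nu = lp"
proof -
  have il1: "interl lp la" and c1: "card (skew_cells lp la) = s"
    using hs_char[THEN iffD1, OF h1] by simp_all
  have pr: "is_partition rho" and il2: "interl lp rho" and c2: "card (skew_cells lp rho) = r"
    using hs_char[THEN iffD1, OF h2] by simp_all
  have a1: "\<And>i. la i \<le> lp i" "\<And>i. lp (Suc i) \<le> la i" using il1 unfolding interl_def by blast+
  have a2: "\<And>i. rho i \<le> lp i" "\<And>i. lp (Suc i) \<le> rho i" using il2 unfolding interl_def by blast+
  have nui: "nu i = max (la (Suc i)) (rho (Suc i)) + min (la i) (rho i) - lp (Suc i)" for i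
    unfolding nu_def Lnu_def by simp
  have nub: "max (la (Suc i)) (rho (Suc i)) \<le> nu i \<and> nu i \<le> min (la i) (rho i)" for i
    using nui[of i] a1[of i] a2[of i] a1(1)[of "Suc i"] a2(1)[of "Suc i"] by (auto simp: max_def min_def)
  have il3: "interl la nu" unfolding interl_def using nub by simp
  have il4: "interl rho nu" unfolding interl_def using nub by simp
  have pnu: "is_partition nu" by (rule interl_part_in[OF pl il3])
  obtain N where N1: "\<And>i. N \<le> i \<Longrightarrow> la i = 0" and N2: "\<And>i. N \<le> i \<Longrightarrow> rho i = 0"
    using L2_common[OF pl pr] by blast
  have lpN: "\<And>i. Suc N \<le> i \<Longrightarrow> lp i = 0"
  proof -
    fix i assume "Suc N \<le> i"
    then obtain j where j: "i = Suc j" "N \<le> j" by (cases i) auto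
    then show "lp i = 0" using a1(2)[of j] N1[of j] by simp
  qed
  have nuN: "\<And>i. N \<le> i \<Longrightarrow> nu i = 0" using nub N1 by (metis le_zero_eq min.boundedE)
  have cla: "int s = (\<Sum>i<Suc N. int (lp i) - int (la i))"
    using card_cells_int[of la lp "Suc N"] a1(1) lpN c1 by simp
  have crho: "int r = (\<Sum>i<Suc N. int (lp i) - int (rho i))"
    using card_cells_int[of rho lp "Suc N"] a2(1) lpN c2 by simp
  have c3: "int (card (skew_cells la nu)) = (\<Sum>i<N. int (la i) - int (nu i))"
    using card_cells_int[of nu la N] nub N1 by simp
  have c4: "int (card (skew_cells rho nu)) = (\<Sum>i<N. int (rho i) - int (nu i))"
    using card_cells_int[of nu rho N] nub N2 by simp
  have sl: "(\<Sum>i<Suc N. int (lp i)) = int (lp 0) + (\<Sum>j<N. int (lp (Suc j)))"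
    by (rule sum.lessThan_Suc_shift)
  have sla: "(\<Sum>i<Suc N. int (la i)) = (\<Sum>i<N. int (la i))" using N1[of N] by simp
  have srho: "(\<Sum>i<Suc N. int (rho i)) = (\<Sum>i<N. int (rho i))" using N2[of N] by simp
  define A where "A i = max (la i) (rho i)" for i
  define B where "B i = min (la i) (rho i)" for i
  have AB: "int (A i) + int (B i) = int (la i) + int (rho i)" for i unfolding A_def B_def by simp
  have nuint: "int (nu i) = int (A (Suc i)) + int (B i) - int (lp (Suc i))" for i
  proof -
    have "lp (Suc i) \<le> A (Suc i) + B i" using a1(2)[of i] a2(2)[of i] unfolding A_def B_def by simp
    then show ?thesis using nui[of i] unfolding A_def B_def by (simp add: of_nat_diff)
  qed
  have sA: "(\<Sum>j<N. int (A (Suc j))) = (\<Sum>i<N. int (A i)) - int (A 0)"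
    by (rule shift_sum_int) (simp add: A_def N1 N2)
  have snu: "(\<Sum>i<N. int (nu i)) = (\<Sum>j<N. int (A (Suc j))) + (\<Sum>i<N. int (B i)) - (\<Sum>j<N. int (lp (Suc j)))"
    unfolding nuint by (simp add: sum.distrib sum_subtractf)
  have sAB: "(\<Sum>i<N. int (A i)) + (\<Sum>i<N. int (B i)) = (\<Sum>i<N. int (la i)) + (\<Sum>i<N. int (rho i))"
    using AB by (simp add: sum.distrib[symmetric])
  have A0: "A 0 \<le> lp 0" unfolding A_def using a1(1)[of 0] a2(1)[of 0] by simp
  have tI: "int t = int (lp 0) - int (A 0)" unfolding t_def A_def[symmetric] using A0 by simp
  have key1: "int (card (skew_cells la nu)) = int r - int t"
    using c3 crho sl srho snu sA sAB tI by (simp add: sum_subtractf)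
  have key2: "int (card (skew_cells rho nu)) = int s - int t"
    using c4 cla sl sla snu sA sAB tI by (simp add: sum_subtractf)
  have tr: "t \<le> r" using key1 by linarith
  have ts: "t \<le> s" using key2 by linarith
  have k1: "card (skew_cells la nu) = r - t" using key1 tr by linarith
  have k2: "card (skew_cells rho nu) = s - t" using key2 ts by linarith
  have hs1: "horizontal_strip la nu (r - t)" unfolding hs_char using pnu il3 k1 by blast
  have hs2: "horizontal_strip rho nu (s - t)" unfolding hs_char using pnu il4 k2 by blast
  have rec: "Llp la rho t nu = lp"
  proof
    fix i show "Llp la rho t nu i = lp i"
    proof (cases i)
      case 0 then show ?thesis unfolding Llp_def t_def using A0 unfolding A_def by simp
    next
      case (Suc j)
      have "lp (Suc j) \<le> max (la (Suc j)) (rho (Suc j)) + min (la j) (rho j)"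
        using a1(2)[of j] a2(2)[of j] by simp
      then show ?thesis unfolding Llp_def Suc using nui[of j] by simp
    qed
  qed
  show ?thesis using tr ts hs1 hs2 rec by blast
qed

lemma L2_bwd:
  assumes pl: "is_partition la" and tr: "t \<le> r" and ts: "t \<le> s"
    and h1: "horizontal_strip la nu (r - t)" and h2: "horizontal_strip rho nu (s - t)"
  defines "lp \<equiv> Llp la rho t nu"
  shows "horizontal_strip lp la s \<and> horizontal_strip lp rho r \<and> lp 0 - max (la 0) (rho 0) = t
     \<and> Lnu la rho lp = nu"
proof -
  have pnu: "is_partition nu" and il1: "interl la nu" and c1: "card (skew_cells la nu) = r - t"
    using hs_char[THEN iffD1, OF h1] by simp_all
  have il2: "interl rho nu" and c2: "card (skew_cells rho nu) = s - t"
    using hs_char[THEN iffD1, OF h2] by simp_all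
  have pr: "is_partition rho" by (rule interl_part_out[OF pnu il2])
  have a1: "\<And>i. nu i \<le> la i" "\<And>i. la (Suc i) \<le> nu i" using il1 unfolding interl_def by blast+
  have a2: "\<And>i. nu i \<le> rho i" "\<And>i. rho (Suc i) \<le> nu i" using il2 unfolding interl_def by blast+
  have lp0: "lp 0 = max (la 0) (rho 0) + t" unfolding lp_def Llp_def by simp
  have lpS: "lp (Suc j) = max (la (Suc j)) (rho (Suc j)) + min (la j) (rho j) - nu j" for j
    unfolding lp_def Llp_def by simp
  have lpb: "max (la (Suc j)) (rho (Suc j)) \<le> lp (Suc j) \<and> lp (Suc j) \<le> min (la j) (rho j)" for j
    using lpS[of j] a1[of j] a2[of j] by (auto simp: max_def min_def)
  have ge: "la i \<le> lp i \<and> rho i \<le> lp i" for i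
  proof (cases i)
    case 0 then show ?thesis using lp0 by (auto simp: max_def)
  next
    case (Suc j) then show ?thesis using lpb[of j] by simp
  qed
  have il3: "interl lp la" unfolding interl_def using ge lpb by simp
  have il4: "interl lp rho" unfolding interl_def using ge lpb by simp
  obtain N where N1: "\<And>i. N \<le> i \<Longrightarrow> la i = 0" and N2: "\<And>i. N \<le> i \<Longrightarrow> rho i = 0"
    using L2_common[OF pl pr] by blast
  have lpN: "\<And>i. Suc N \<le> i \<Longrightarrow> lp i = 0"
  proof -
    fix i assume "Suc N \<le> i"
    then obtain j where j: "i = Suc j" "N \<le> j" by (cases i) auto
    then show "lp i = 0" using lpb[of j] N1[of j] by simp
  qed
  have cla: "int (card (skew_cells lp la)) = (\<Sum>i<Suc N. int (lp i) - int (la i))"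
    using card_cells_int[of la lp "Suc N"] ge lpN by simp
  have crho: "int (card (skew_cells lp rho)) = (\<Sum>i<Suc N. int (lp i) - int (rho i))"
    using card_cells_int[of rho lp "Suc N"] ge lpN by simp
  have c3: "int (r - t) = (\<Sum>i<N. int (la i) - int (nu i))"
    using card_cells_int[of nu la N] a1 N1 c1 by simp
  have c4: "int (s - t) = (\<Sum>i<N. int (rho i) - int (nu i))"
    using card_cells_int[of nu rho N] a2 N2 c2 by simp
  have sl: "(\<Sum>i<Suc N. int (lp i)) = int (lp 0) + (\<Sum>j<N. int (lp (Suc j)))"
    by (rule sum.lessThan_Suc_shift)
  have sla: "(\<Sum>i<Suc N. int (la i)) = (\<Sum>i<N. int (la i))" using N1[of N] by simp
  have srho: "(\<Sum>i<Suc N. int (rho i)) = (\<Sum>i<N. int (rho i))" using N2[of N] by simp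
  define A where "A i = max (la i) (rho i)" for i
  define B where "B i = min (la i) (rho i)" for i
  have AB: "int (A i) + int (B i) = int (la i) + int (rho i)" for i unfolding A_def B_def by simp
  have lpint: "int (lp (Suc j)) = int (A (Suc j)) + int (B j) - int (nu j)" for j
    using lpS[of j] a1[of j] a2[of j] unfolding A_def B_def by simp
  have sA: "(\<Sum>j<N. int (A (Suc j))) = (\<Sum>i<N. int (A i)) - int (A 0)"
    by (rule shift_sum_int) (simp add: A_def N1 N2)
  have slp: "(\<Sum>j<N. int (lp (Suc j))) = (\<Sum>j<N. int (A (Suc j))) + (\<Sum>i<N. int (B i)) - (\<Sum>j<N. int (nu j))"
    unfolding lpint by (simp add: sum.distrib sum_subtractf)
  have sAB: "(\<Sum>i<N. int (A i)) + (\<Sum>i<N. int (B i)) = (\<Sum>i<N. int (la i)) + (\<Sum>i<N. int (rho i))"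
    using AB by (simp add: sum.distrib[symmetric])
  have l0: "int (lp 0) = int (A 0) + int t" using lp0 unfolding A_def by simp
  have k1: "int (card (skew_cells lp la)) = int s"
    using cla sl sla slp sA sAB l0 c4 ts by (simp add: sum_subtractf)
  have k2: "int (card (skew_cells lp rho)) = int r"
    using crho sl srho slp sA sAB l0 c3 tr by (simp add: sum_subtractf)
  have hs1: "horizontal_strip lp la s" unfolding hs_char using pl il3 k1 by simp
  have hs2: "horizontal_strip lp rho r" unfolding hs_char using pr il4 k2 by simp
  have t0: "lp 0 - max (la 0) (rho 0) = t" using lp0 by simp
  have rec: "Lnu la rho lp = nu"
  proof
    fix i show "Lnu la rho lp i = nu i"
      unfolding Lnu_def using lpS[of i] a1[of i] a2[of i] by simp
  qed
  show ?thesis using hs1 hs2 t0 rec by blast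
qed

definition HSU :: "nat \<Rightarrow> (nat \<Rightarrow> nat) \<Rightarrow> (nat \<Rightarrow> nat) set" where
  "HSU s la = {lp. horizontal_strip lp la s}"
definition HSP :: "nat \<Rightarrow> (nat \<Rightarrow> nat) \<Rightarrow> (nat \<Rightarrow> nat) set" where
  "HSP r la = {nu. horizontal_strip la nu r}"
definition VSD :: "nat \<Rightarrow> (nat \<Rightarrow> nat) \<Rightarrow> (nat \<Rightarrow> nat) set" where
  "VSD k mu = {mm. vertical_strip mu mm k}"

lemma HSU_part: "lp \<in> HSU s la \<Longrightarrow> is_partition lp"
  unfolding HSU_def horizontal_strip_def by simp
lemma HSP_part: "nu \<in> HSP s la \<Longrightarrow> is_partition nu"
  unfolding HSP_def horizontal_strip_def by simp
lemma VSD_part: "mm \<in> VSD s la \<Longrightarrow> is_partition mm"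
  unfolding VSD_def vertical_strip_def by simp

lemma fin_HSU: "is_partition la \<Longrightarrow> finite (HSU s la)"
  unfolding HSU_def by (rule finite_HSU)
lemma fin_HSP: "is_partition la \<Longrightarrow> finite (HSP s la)"
  unfolding HSP_def by (rule finite_HSP)
lemma fin_VSD: "is_partition la \<Longrightarrow> finite (VSD s la)"
  unfolding VSD_def by (rule finite_VSD)

lemma L2sum:
  fixes F :: "(nat \<Rightarrow> nat) \<Rightarrow> int"
  assumes pl: "is_partition la"
  shows "(\<Sum>lp\<in>HSU s la. \<Sum>rho\<in>HSP r lp. F rho)
       = (\<Sum>t\<in>{0..min r s}. \<Sum>nu\<in>HSP (r - t) la. \<Sum>rho\<in>HSU (s - t) nu. F rho)"
proof -
  let ?P = "Sigma (HSU s la) (\<lambda>lp. HSP r lp)"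
  let ?Q = "Sigma {0..min r s} (\<lambda>t. Sigma (HSP (r - t) la) (\<lambda>nu. HSU (s - t) nu))"
  have L: "(\<Sum>lp\<in>HSU s la. \<Sum>rho\<in>HSP r lp. F rho) = (\<Sum>(lp, rho)\<in>?P. F rho)"
    by (rule sum.Sigma) (auto intro: fin_HSU[OF pl] fin_HSP HSU_part)
  have R1: "(\<Sum>nu\<in>HSP (r - t) la. \<Sum>rho\<in>HSU (s - t) nu. F rho)
       = (\<Sum>(nu, rho)\<in>Sigma (HSP (r - t) la) (\<lambda>nu. HSU (s - t) nu). F rho)" for t
    by (rule sum.Sigma) (auto intro: fin_HSP[OF pl] fin_HSU HSP_part)
  have R2: "(\<Sum>t\<in>{0..min r s}. \<Sum>(nu, rho)\<in>Sigma (HSP (r - t) la) (\<lambda>nu. HSU (s - t) nu). F rho)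
      = (\<Sum>(t, y)\<in>?Q. (case y of (nu, rho) \<Rightarrow> F rho))"
    by (rule sum.Sigma) (auto intro!: finite_SigmaI fin_HSP[OF pl] fin_HSU HSP_part)
  have M: "(\<Sum>(lp, rho)\<in>?P. F rho) = (\<Sum>(t, y)\<in>?Q. (case y of (nu, rho) \<Rightarrow> F rho))"
  proof (rule sum.reindex_bij_witness[where j = "\<lambda>(lp, rho). (lp 0 - max (la 0) (rho 0), Lnu la rho lp, rho)"
        and i = "\<lambda>(t, nu, rho). (Llp la rho t nu, rho)"])
    fix a assume a: "a \<in> ?P"
    obtain lp rho where e: "a = (lp, rho)" by (cases a)
    have h1: "horizontal_strip lp la s" and h2: "horizontal_strip lp rho r"
      using a e unfolding HSU_def HSP_def by auto
    note f = L2_fwd[OF pl h1 h2]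
    show "(\<lambda>(t, nu, rho). (Llp la rho t nu, rho)) ((\<lambda>(lp, rho). (lp 0 - max (la 0) (rho 0), Lnu la rho lp, rho)) a) = a"
      using f e by simp
    show "(\<lambda>(lp, rho). (lp 0 - max (la 0) (rho 0), Lnu la rho lp, rho)) a \<in> ?Q"
      using f e unfolding HSU_def HSP_def by simp
    show "(case (\<lambda>(lp, rho). (lp 0 - max (la 0) (rho 0), Lnu la rho lp, rho)) a of (t, y) \<Rightarrow> (case y of (nu, rho) \<Rightarrow> F rho))
        = (case a of (lp, rho) \<Rightarrow> F rho)" using e by simp
  next
    fix b assume b: "b \<in> ?Q"
    obtain t nu rho where e: "b = (t, nu, rho)" by (cases b) auto
    have t: "t \<le> r" "t \<le> s" and h1: "horizontal_strip la nu (r - t)" and h2: "horizontal_strip rho nu (s - t)"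
      using b e unfolding HSU_def HSP_def by auto
    note g = L2_bwd[OF pl t h1 h2]
    show "(\<lambda>(lp, rho). (lp 0 - max (la 0) (rho 0), Lnu la rho lp, rho)) ((\<lambda>(t, nu, rho). (Llp la rho t nu, rho)) b) = b"
      using g e by simp
    show "(\<lambda>(t, nu, rho). (Llp la rho t nu, rho)) b \<in> ?P"
      using g e unfolding HSU_def HSP_def by simp
  qed
  show ?thesis using L M R1 R2 by simp
qed

definition pairs :: "(nat \<Rightarrow> nat) \<Rightarrow> ((nat \<Rightarrow> nat) \<times> (nat \<Rightarrow> nat)) set" where
  "pairs p = {(q1, q2). \<forall>i. q1 i + q2 i = p i}"

definition conv :: "((nat \<Rightarrow> nat) \<Rightarrow> int) \<Rightarrow> ((nat \<Rightarrow> nat) \<Rightarrow> int) \<Rightarrow> (nat \<Rightarrow> nat) \<Rightarrow> int" where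
  "conv f g p = (\<Sum>(q1, q2)\<in>pairs p. f q1 * g q2)"

definition H :: "nat \<Rightarrow> (nat \<Rightarrow> nat) \<Rightarrow> int" where
  "H n p = (if p 0 = 0 \<and> (\<Sum>k\<in>{k. p k \<noteq> 0}. p k) = n then 1 else 0)"

lemma finite_pairs:
  assumes "\<And>i. m < i \<Longrightarrow> p i = 0"
  shows "finite (pairs p)"
proof -
  have "{i. p i \<noteq> 0} \<subseteq> {..m}"
  proof
    fix i assume "i \<in> {i. p i \<noteq> 0}"
    then have "\<not> m < i" using assms by auto
    then show "i \<in> {..m}" by simp
  qed
  then have fp: "finite {i. p i \<noteq> 0}" by (rule finite_subset) simp
  have "pairs p \<subseteq> {q. \<forall>i. q i \<le> p i} \<times> {q. \<forall>i. q i \<le> p i}"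
  proof
    fix x assume "x \<in> pairs p"
    then obtain q1 q2 where e: "x = (q1, q2)" "\<forall>i. q1 i + q2 i = p i" unfolding pairs_def by auto
    have "q1 i \<le> p i \<and> q2 i \<le> p i" for i using spec[OF e(2), of i] by linarith
    then have "\<forall>i. q1 i \<le> p i" "\<forall>i. q2 i \<le> p i" by simp_all
    then show "x \<in> {q. \<forall>i. q i \<le> p i} \<times> {q. \<forall>i. q i \<le> p i}" using e by simp
  qed
  moreover have "finite ({q. \<forall>i. q i \<le> p i} \<times> {q. \<forall>i. q i \<le> p i})"
    using finite_below[OF fp] by simp
  ultimately show ?thesis by (rule finite_subset)
qed

lemma pairs_zero: "pairs (\<lambda>_. 0) = {(\<lambda>_. 0, \<lambda>_. 0)}"
proof
  show "pairs (\<lambda>_. 0) \<subseteq> {(\<lambda>_. 0, \<lambda>_. 0)}"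
  proof
    fix x assume "x \<in> pairs (\<lambda>_. 0)"
    then obtain q1 q2 where e: "x = (q1, q2)" "\<forall>i. q1 i + q2 i = 0" unfolding pairs_def by auto
    then have "q1 = (\<lambda>_. 0)" "q2 = (\<lambda>_. 0)" by (simp_all add: fun_eq_iff)
    then show "x \<in> {(\<lambda>_. 0, \<lambda>_. 0)}" using e by simp
  qed
  show "{(\<lambda>_. 0, \<lambda>_. 0)} \<subseteq> pairs (\<lambda>_. 0)" unfolding pairs_def by simp
qed

lemma conv_zero: "conv f g (\<lambda>_. 0) = f (\<lambda>_. 0) * g (\<lambda>_. 0)"
  unfolding conv_def pairs_zero by simp

lemma conv_unit:
  assumes "\<And>i. m < i \<Longrightarrow> p i = 0"
  shows "conv (\<lambda>q. if q = (\<lambda>_. 0) then 1 else 0) g p = g p"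
proof -
  have "conv (\<lambda>q. if q = (\<lambda>_. 0) then 1 else 0) g p = (\<Sum>x\<in>pairs p. if fst x = (\<lambda>_. 0) then g (snd x) else 0)"
    unfolding conv_def by (rule sum.cong) (auto simp: case_prod_beta)
  also have "\<dots> = (\<Sum>x\<in>{x \<in> pairs p. fst x = (\<lambda>_. 0)}. g (snd x))"
    by (rule sum.inter_filter[symmetric, OF finite_pairs[OF assms]])
  also have "{x \<in> pairs p. fst x = (\<lambda>_. 0)} = {(\<lambda>_. 0, p)}"
  proof
    show "{x \<in> pairs p. fst x = (\<lambda>_. 0)} \<subseteq> {(\<lambda>_. 0, p)}"
    proof
      fix x assume "x \<in> {x \<in> pairs p. fst x = (\<lambda>_. 0)}"
      then obtain q1 q2 where e: "x = (q1, q2)" "\<forall>i. q1 i + q2 i = p i" "q1 = (\<lambda>_. 0)"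
        unfolding pairs_def by auto
      then have "q2 = p" by (simp add: fun_eq_iff)
      then show "x \<in> {(\<lambda>_. 0, p)}" using e by simp
    qed
    show "{(\<lambda>_. 0, p)} \<subseteq> {x \<in> pairs p. fst x = (\<lambda>_. 0)}" unfolding pairs_def by simp
  qed
  finally show ?thesis by simp
qed

lemma conv_split:
  assumes m1: "1 \<le> m" and pbig: "\<And>i. m < i \<Longrightarrow> p i = 0"
  shows "conv f g p = (\<Sum>t\<in>{0..p m}. \<Sum>(q1, q2)\<in>pairs (p(m := 0)). f (q1(m := p m - t)) * g (q2(m := t)))"
proof -
  let ?r = "p m"
  let ?D = "pairs (p(m := 0))"
  have pbig': "\<And>i. m < i \<Longrightarrow> (p(m := 0)) i = 0" using pbig by simp
  have fD: "finite ?D" by (rule finite_pairs[of m], rule pbig')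
  have "(\<Sum>t\<in>{0..p m}. \<Sum>(q1, q2)\<in>?D. f (q1(m := ?r - t)) * g (q2(m := t)))
      = (\<Sum>(t, y)\<in>Sigma {0..?r} (\<lambda>_. ?D). (case y of (q1, q2) \<Rightarrow> f (q1(m := ?r - t)) * g (q2(m := t))))"
    by (rule sum.Sigma) (use fD in auto)
  also have "\<dots> = conv f g p"
    unfolding conv_def
  proof (rule sum.reindex_bij_witness[where i = "\<lambda>(q1, q2). (q2 m, q1(m := 0), q2(m := 0))"
        and j = "\<lambda>(t, q1, q2). (q1(m := ?r - t), q2(m := t))"])
    fix a assume a: "a \<in> Sigma {0..?r} (\<lambda>_. ?D)"
    obtain t q1 q2 where e: "a = (t, q1, q2)" by (cases a) auto
    have t: "t \<le> ?r" and q: "\<And>i. q1 i + q2 i = (p(m := 0)) i" using a e unfolding pairs_def by auto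
    have z: "q1 m = 0" "q2 m = 0" using q[of m] by simp_all
    show "(\<lambda>(q1, q2). (q2 m, q1(m := 0), q2(m := 0))) ((\<lambda>(t, q1, q2). (q1(m := ?r - t), q2(m := t))) a) = a"
      using e z by (simp add: fun_eq_iff)
    have "\<forall>i. (q1(m := ?r - t)) i + (q2(m := t)) i = p i"
    proof
      fix i show "(q1(m := ?r - t)) i + (q2(m := t)) i = p i"
      proof (cases "i = m")
        case True then show ?thesis using t by simp
      next
        case False then show ?thesis using q[of i] by simp
      qed
    qed
    then show "(\<lambda>(t, q1, q2). (q1(m := ?r - t), q2(m := t))) a \<in> pairs p"
      using e unfolding pairs_def by simp
    show "(case (\<lambda>(t, q1, q2). (q1(m := ?r - t), q2(m := t))) a of (q1, q2) \<Rightarrow> f q1 * g q2)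
        = (case a of (t, y) \<Rightarrow> (case y of (q1, q2) \<Rightarrow> f (q1(m := ?r - t)) * g (q2(m := t))))"
      using e by simp
  next
    fix b assume b: "b \<in> pairs p"
    obtain q1 q2 where e: "b = (q1, q2)" by (cases b)
    have q: "\<And>i. q1 i + q2 i = p i" using b e unfolding pairs_def by auto
    show "(\<lambda>(t, q1, q2). (q1(m := ?r - t), q2(m := t))) ((\<lambda>(q1, q2). (q2 m, q1(m := 0), q2(m := 0))) b) = b"
      using e q[of m] by (simp add: fun_eq_iff)
    have t: "q2 m \<le> ?r" using q[of m] by linarith
    have "\<forall>i. (q1(m := 0)) i + (q2(m := 0)) i = (p(m := 0)) i"
    proof
      fix i show "(q1(m := 0)) i + (q2(m := 0)) i = (p(m := 0)) i"
      proof (cases "i = m")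
        case True then show ?thesis by simp
      next
        case False then show ?thesis using q[of i] by simp
      qed
    qed
    then show "(\<lambda>(q1, q2). (q2 m, q1(m := 0), q2(m := 0))) b \<in> Sigma {0..?r} (\<lambda>_. ?D)"
      using e t unfolding pairs_def by simp
  qed
  finally show ?thesis by simp
qed

lemma supp_sum:
  fixes q :: "nat \<Rightarrow> nat"
  assumes "\<And>i. m < i \<Longrightarrow> q i = 0"
  shows "(\<Sum>k\<in>{k. q k \<noteq> 0}. q k) = (\<Sum>k\<le>m. q k)"
proof (rule sum.mono_neutral_left)
  show "finite {..m}" by simp
  show "{k. q k \<noteq> 0} \<subseteq> {..m}"
  proof
    fix i assume "i \<in> {k. q k \<noteq> 0}"
    then have "\<not> m < i" using assms by auto
    then show "i \<in> {..m}" by simp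
  qed
  show "\<forall>i\<in>{..m} - {k. q k \<noteq> 0}. q i = 0" by simp
qed

lemma H_upd:
  assumes m1: "1 \<le> m" and qm: "q m = 0" and qbig: "\<And>i. m < i \<Longrightarrow> q i = 0"
  shows "H n (q(m := t)) = (if t \<le> n then H (n - t) q else 0)"
proof -
  obtain m0 where m0: "m = Suc m0" using m1 by (cases m) auto
  have s1: "(\<Sum>k\<in>{k. (q(m := t)) k \<noteq> 0}. (q(m := t)) k) = (\<Sum>k\<le>m. (q(m := t)) k)"
    by (rule supp_sum) (use qbig in simp)
  have s2: "(\<Sum>k\<in>{k. q k \<noteq> 0}. q k) = (\<Sum>k\<le>m. q k)" by (rule supp_sum) (use qbig in simp)
  have s3: "(\<Sum>k\<le>m. (q(m := t)) k) = (\<Sum>k\<le>m0. q k) + t" unfolding m0 by simp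
  have s4: "(\<Sum>k\<le>m. q k) = (\<Sum>k\<le>m0. q k)" unfolding m0 using qm m0 by simp
  have z: "(q(m := t)) 0 = q 0" using m1 by simp
  show ?thesis unfolding H_def s1 s2 s3 s4 z by auto
qed

lemma H_zero: "H n (\<lambda>_. 0) = (if n = 0 then 1 else 0)"
  unfolding H_def by simp

lemma SK'_p0: "p 0 \<noteq> 0 \<Longrightarrow> SK' la mu p = 0"
proof -
  assume p0: "p 0 \<noteq> 0"
  have "tabs la mu p = {}"
  proof (rule equals0I)
    fix T assume T: "T \<in> tabs la mu p"
    then have "p 0 = card {c \<in> skew_cells la mu. T c = 0}" and pos: "\<forall>c \<in> skew_cells la mu. 1 \<le> T c"
      unfolding tabs_def ssyt_def by blast+
    moreover have "{c \<in> skew_cells la mu. T c = 0} = {}" using pos by fastforce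
    ultimately show False using p0 by simp
  qed
  then show ?thesis unfolding SK'_def SK_def by simp
qed

lemma SW:
  fixes h :: "nat \<Rightarrow> nat \<Rightarrow> int"
  shows "(\<Sum>t\<in>{0..r}. if t \<le> n then (\<Sum>k\<in>{0..n - t}. h t k) else 0)
       = (\<Sum>k\<in>{0..n}. \<Sum>t\<in>{0..min r (n - k)}. h t k)"
proof -
  have l: "(if t \<le> n then (\<Sum>k\<in>{0..n - t}. h t k) else 0) = (\<Sum>k\<in>{0..n}. if t + k \<le> n then h t k else 0)" for t
  proof -
    have "(\<Sum>k\<in>{0..n}. if t + k \<le> n then h t k else 0) = (\<Sum>k\<in>{k \<in> {0..n}. t + k \<le> n}. h t k)"
      by (rule sum.inter_filter[symmetric]) simp
    also have "{k \<in> {0..n}. t + k \<le> n} = (if t \<le> n then {0..n - t} else {})" by auto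
    finally show ?thesis by simp
  qed
  have r: "(\<Sum>t\<in>{0..r}. if t + k \<le> n then h t k else 0) = (\<Sum>t\<in>{0..min r (n - k)}. h t k)" if "k \<le> n" for k
  proof -
    have "(\<Sum>t\<in>{0..r}. if t + k \<le> n then h t k else 0) = (\<Sum>t\<in>{t \<in> {0..r}. t + k \<le> n}. h t k)"
      by (rule sum.inter_filter[symmetric]) simp
    also have "{t \<in> {0..r}. t + k \<le> n} = {0..min r (n - k)}" using that by auto
    finally show ?thesis .
  qed
  have "(\<Sum>t\<in>{0..r}. if t \<le> n then (\<Sum>k\<in>{0..n - t}. h t k) else 0)
      = (\<Sum>t\<in>{0..r}. \<Sum>k\<in>{0..n}. if t + k \<le> n then h t k else 0)" using l by simp
  also have "\<dots> = (\<Sum>k\<in>{0..n}. \<Sum>t\<in>{0..r}. if t + k \<le> n then h t k else 0)" by (rule sum.swap)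
  also have "\<dots> = (\<Sum>k\<in>{0..n}. \<Sum>t\<in>{0..min r (n - k)}. h t k)" using r by simp
  finally show ?thesis .
qed

definition RHSf :: "(nat \<Rightarrow> nat) \<Rightarrow> (nat \<Rightarrow> nat) \<Rightarrow> nat \<Rightarrow> (nat \<Rightarrow> nat) \<Rightarrow> int" where
  "RHSf la mu n p = (\<Sum>k = 0..n. (-1::int) ^ k *
      (\<Sum>(lp, mm) \<in> {(lp, mm). horizontal_strip lp la (n - k) \<and> vertical_strip mu mm k}. SK' lp mm p))"

lemma S_eq: "{(lp, mm). horizontal_strip lp la N \<and> vertical_strip mu mm k} = HSU N la \<times> VSD k mu"
  unfolding HSU_def VSD_def by auto

lemma conv_alt: "conv f g p = (\<Sum>x\<in>pairs p. f (fst x) * g (snd x))"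
  unfolding conv_def by (simp add: case_prod_beta)

lemma RHSf_alt: "RHSf la mu n p = (\<Sum>k = 0..n. (-1::int) ^ k *
      (\<Sum>mm\<in>VSD k mu. \<Sum>lp\<in>HSU (n - k) la. SK' lp mm p))"
proof -
  have "(\<Sum>(lp, mm) \<in> {(lp, mm). horizontal_strip lp la (n - k) \<and> vertical_strip mu mm k}. SK' lp mm p)
      = (\<Sum>mm\<in>VSD k mu. \<Sum>lp\<in>HSU (n - k) la. SK' lp mm p)" for k
    unfolding S_eq sum.cartesian_product[symmetric] by (rule sum.swap)
  then show ?thesis unfolding RHSf_def by simp
qed

lemma main_base:
  assumes pl: "is_partition la" and pmu: "is_partition mu"
  shows "conv (SK' la mu) (H n) (\<lambda>_. 0) = RHSf la mu n (\<lambda>_. 0)"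
proof -
  have lhs: "conv (SK' la mu) (H n) (\<lambda>_. 0) = (if n = 0 \<and> la = mu then 1 else 0)"
    unfolding conv_zero SK'_zero[OF pl pmu] H_zero by simp
  have inner: "(\<Sum>(lp, mm) \<in> {(lp, mm). horizontal_strip lp la (n - k) \<and> vertical_strip mu mm k}. SK' lp mm (\<lambda>_. 0))
      = int (card {rho. horizontal_strip rho la (n - k) \<and> vertical_strip mu rho k})" for k
  proof -
    let ?A = "HSU (n - k) la \<times> VSD k mu"
    have fA: "finite ?A" using fin_HSU[OF pl] fin_VSD[OF pmu] by simp
    have "(\<Sum>(lp, mm) \<in> ?A. SK' lp mm (\<lambda>_. 0)) = (\<Sum>x\<in>?A. if fst x = snd x then 1 else 0)"
    proof (rule sum.cong[OF refl])
      fix x assume "x \<in> ?A"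
      then have "is_partition (fst x)" "is_partition (snd x)" using HSU_part VSD_part by (auto simp: mem_Times_iff)
      then show "(case x of (lp, mm) \<Rightarrow> SK' lp mm (\<lambda>_. 0)) = (if fst x = snd x then 1 else 0)"
        using SK'_zero by (simp add: case_prod_beta)
    qed
    also have "\<dots> = (\<Sum>x\<in>{x \<in> ?A. fst x = snd x}. 1)" by (rule sum.inter_filter[symmetric, OF fA])
    also have "{x \<in> ?A. fst x = snd x} = (\<lambda>r. (r, r)) ` {rho. horizontal_strip rho la (n - k) \<and> vertical_strip mu rho k}"
      unfolding HSU_def VSD_def by auto
    also have "(\<Sum>x\<in>(\<lambda>r. (r, r)) ` {rho. horizontal_strip rho la (n - k) \<and> vertical_strip mu rho k}. (1::int))
       = int (card {rho. horizontal_strip rho la (n - k) \<and> vertical_strip mu rho k})"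
      by (simp add: card_image inj_on_def)
    finally show ?thesis unfolding S_eq .
  qed
  show ?thesis unfolding lhs RHSf_def inner using L1[OF pl pmu, of n] by simp
qed

lemma main_step:
  assumes m1: "1 \<le> m" and pl: "is_partition la" and pmu: "is_partition mu"
    and pbig: "\<And>i. m < i \<Longrightarrow> p i = 0"
    and IH: "\<And>la' n'. is_partition la' \<Longrightarrow> conv (SK' la' mu) (H n') (p(m := 0)) = RHSf la' mu n' (p(m := 0))"
  shows "conv (SK' la mu) (H n) p = RHSf la mu n p"
proof -
  let ?r = "p m"
  let ?p' = "p(m := 0)"
  let ?D = "pairs ?p'"
  define h where "h t k = (\<Sum>nu\<in>HSP (?r - t) la. (-1::int) ^ k *
       (\<Sum>mm\<in>VSD k mu. \<Sum>rho\<in>HSU (n - k - t) nu. SK' rho mm ?p'))" for t k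
  have inner: "(\<Sum>(q1, q2)\<in>?D. SK' la mu (q1(m := ?r - t)) * H n (q2(m := t)))
      = (if t \<le> n then (\<Sum>nu\<in>HSP (?r - t) la. conv (SK' nu mu) (H (n - t)) ?p') else 0)" for t
  proof -
    have "(\<Sum>(q1, q2)\<in>?D. SK' la mu (q1(m := ?r - t)) * H n (q2(m := t)))
        = (\<Sum>x\<in>?D. (\<Sum>nu\<in>HSP (?r - t) la. SK' nu mu (fst x)) * (if t \<le> n then H (n - t) (snd x) else 0))"
    proof (rule sum.cong[OF refl])
      fix x assume x: "x \<in> ?D"
      obtain q1 q2 where e: "x = (q1, q2)" by (cases x)
      have q: "\<And>i. q1 i + q2 i = ?p' i" using x e unfolding pairs_def by simp
      have z1: "q1 m = 0" and z2: "q2 m = 0" using q[of m] by simp_all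
      have b1: "\<And>i. m < i \<Longrightarrow> q1 i = 0" and b2: "\<And>i. m < i \<Longrightarrow> q2 i = 0"
        using q pbig by (metis add_is_0 fun_upd_apply)+
      have b1': "\<And>i. m < i \<Longrightarrow> (q1(m := ?r - t)) i = 0" using b1 by simp
      have t2: "SK' la mu (q1(m := ?r - t)) = (\<Sum>nu\<in>HSP (?r - t) la. SK' nu mu q1)"
      proof -
        have "SK' la mu (q1(m := ?r - t)) = (\<Sum>nu\<in>{nu. horizontal_strip la nu ((q1(m := ?r - t)) m)}. SK' nu mu ((q1(m := ?r - t))(m := 0)))"
          by (rule T2[of la mu m "q1(m := ?r - t)", OF pl pmu m1 b1'])
        moreover have "(q1(m := ?r - t))(m := 0) = q1" using z1 by (simp add: fun_eq_iff)
        ultimately show ?thesis unfolding HSP_def by simp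
      qed
      have h2: "H n (q2(m := t)) = (if t \<le> n then H (n - t) q2 else 0)"
        by (rule H_upd[of m q2 n t, OF m1 z2 b2])
      show "(case x of (q1, q2) \<Rightarrow> SK' la mu (q1(m := ?r - t)) * H n (q2(m := t)))
          = (\<Sum>nu\<in>HSP (?r - t) la. SK' nu mu (fst x)) * (if t \<le> n then H (n - t) (snd x) else 0)"
        using e t2 h2 by simp
    qed
    also have "\<dots> = (if t \<le> n then (\<Sum>nu\<in>HSP (?r - t) la. conv (SK' nu mu) (H (n - t)) ?p') else 0)"
    proof (cases "t \<le> n")
      case True
      have "(\<Sum>x\<in>?D. (\<Sum>nu\<in>HSP (?r - t) la. SK' nu mu (fst x)) * H (n - t) (snd x))
          = (\<Sum>x\<in>?D. \<Sum>nu\<in>HSP (?r - t) la. SK' nu mu (fst x) * H (n - t) (snd x))"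
        by (simp add: sum_distrib_right)
      also have "\<dots> = (\<Sum>nu\<in>HSP (?r - t) la. \<Sum>x\<in>?D. SK' nu mu (fst x) * H (n - t) (snd x))"
        by (rule sum.swap)
      also have "\<dots> = (\<Sum>nu\<in>HSP (?r - t) la. conv (SK' nu mu) (H (n - t)) ?p')"
        unfolding conv_alt by simp
      finally show ?thesis using True by simp
    next
      case False then show ?thesis by simp
    qed
    finally show ?thesis .
  qed
  have lhs: "conv (SK' la mu) (H n) p = (\<Sum>t\<in>{0..?r}. if t \<le> n then (\<Sum>k\<in>{0..n - t}. h t k) else 0)"
  proof -
    have "conv (SK' la mu) (H n) p = (\<Sum>t\<in>{0..?r}. \<Sum>(q1, q2)\<in>?D. SK' la mu (q1(m := ?r - t)) * H n (q2(m := t)))"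
      by (rule conv_split[OF m1 pbig])
    also have "\<dots> = (\<Sum>t\<in>{0..?r}. if t \<le> n then (\<Sum>nu\<in>HSP (?r - t) la. conv (SK' nu mu) (H (n - t)) ?p') else 0)"
      using inner by simp
    also have "\<dots> = (\<Sum>t\<in>{0..?r}. if t \<le> n then (\<Sum>k\<in>{0..n - t}. h t k) else 0)"
    proof (rule sum.cong[OF refl])
      fix t
      have "(\<Sum>nu\<in>HSP (?r - t) la. conv (SK' nu mu) (H (n - t)) ?p') = (\<Sum>nu\<in>HSP (?r - t) la. RHSf nu mu (n - t) ?p')"
        using IH HSP_part by (intro sum.cong[OF refl]) blast
      also have "\<dots> = (\<Sum>nu\<in>HSP (?r - t) la. \<Sum>k = 0..n - t. (-1::int) ^ k *
          (\<Sum>mm\<in>VSD k mu. \<Sum>rho\<in>HSU (n - k - t) nu. SK' rho mm ?p'))"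
        unfolding RHSf_alt by (simp add: diff_commute add.commute)
      also have "\<dots> = (\<Sum>k\<in>{0..n - t}. h t k)" unfolding h_def by (rule sum.swap)
      finally show "(if t \<le> n then (\<Sum>nu\<in>HSP (?r - t) la. conv (SK' nu mu) (H (n - t)) ?p') else 0)
          = (if t \<le> n then (\<Sum>k\<in>{0..n - t}. h t k) else 0)" by simp
    qed
    finally show ?thesis .
  qed
  have rhs: "RHSf la mu n p = (\<Sum>k\<in>{0..n}. \<Sum>t\<in>{0..min ?r (n - k)}. h t k)"
  proof -
    have "RHSf la mu n p = (\<Sum>k = 0..n. (-1::int) ^ k * (\<Sum>mm\<in>VSD k mu. \<Sum>lp\<in>HSU (n - k) la. SK' lp mm p))"
      by (rule RHSf_alt)
    also have "\<dots> = (\<Sum>k = 0..n. (-1::int) ^ k * (\<Sum>mm\<in>VSD k mu. \<Sum>lp\<in>HSU (n - k) la. \<Sum>rho\<in>HSP ?r lp. SK' rho mm ?p'))"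
    proof -
      have "SK' lp mm p = (\<Sum>rho\<in>HSP ?r lp. SK' rho mm ?p')" if "lp \<in> HSU s la" "mm \<in> VSD k mu" for lp mm s k
        using T2[OF HSU_part[OF that(1)] VSD_part[OF that(2)] m1 pbig] unfolding HSP_def by simp
      then show ?thesis by simp
    qed
    also have "\<dots> = (\<Sum>k = 0..n. (-1::int) ^ k * (\<Sum>mm\<in>VSD k mu. \<Sum>t\<in>{0..min ?r (n - k)}.
          \<Sum>nu\<in>HSP (?r - t) la. \<Sum>rho\<in>HSU (n - k - t) nu. SK' rho mm ?p'))"
      using L2sum[OF pl] by simp
    also have "\<dots> = (\<Sum>k\<in>{0..n}. \<Sum>t\<in>{0..min ?r (n - k)}. h t k)"
    proof (rule sum.cong[OF refl])
      fix k
      have "(\<Sum>mm\<in>VSD k mu. \<Sum>t\<in>{0..min ?r (n - k)}. \<Sum>nu\<in>HSP (?r - t) la. \<Sum>rho\<in>HSU (n - k - t) nu. SK' rho mm ?p')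
          = (\<Sum>t\<in>{0..min ?r (n - k)}. \<Sum>mm\<in>VSD k mu. \<Sum>nu\<in>HSP (?r - t) la. \<Sum>rho\<in>HSU (n - k - t) nu. SK' rho mm ?p')"
        by (rule sum.swap)
      also have "\<dots> = (\<Sum>t\<in>{0..min ?r (n - k)}. \<Sum>nu\<in>HSP (?r - t) la. \<Sum>mm\<in>VSD k mu. \<Sum>rho\<in>HSU (n - k - t) nu. SK' rho mm ?p')"
        by (rule sum.cong[OF refl], rule sum.swap)
      finally show "(-1::int) ^ k * (\<Sum>mm\<in>VSD k mu. \<Sum>t\<in>{0..min ?r (n - k)}. \<Sum>nu\<in>HSP (?r - t) la. \<Sum>rho\<in>HSU (n - k - t) nu. SK' rho mm ?p')
          = (\<Sum>t\<in>{0..min ?r (n - k)}. h t k)"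
        unfolding h_def by (simp add: sum_distrib_left)
    qed
    finally show ?thesis .
  qed
  show ?thesis unfolding lhs rhs by (rule SW)
qed

lemma main:
  "is_partition la \<Longrightarrow> is_partition mu \<Longrightarrow> p 0 = 0 \<Longrightarrow> (\<And>i. m < i \<Longrightarrow> p i = 0)
    \<Longrightarrow> conv (SK' la mu) (H n) p = RHSf la mu n p"
proof (induction m arbitrary: la mu n p)
  case 0
  have "p = (\<lambda>_. 0)"
  proof
    fix i show "p i = 0" using 0 by (cases i) auto
  qed
  then show ?case using main_base[OF 0(1,2)] by simp
next
  case (Suc m)
  show ?case
  proof (rule main_step[OF _ Suc.prems(1,2,4)])
    show "1 \<le> Suc m" by simp
    fix la' n' assume pl': "is_partition la'"
    have pb: "(p(Suc m := 0)) i = 0" if "m < i" for i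
    proof (cases "i = Suc m")
      case True then show ?thesis by simp
    next
      case False then have "Suc m < i" using that by simp
      then show ?thesis using Suc.prems(4) by simp
    qed
    have p0: "(p(Suc m := 0)) 0 = 0" using Suc.prems(3) by simp
    show "conv (SK' la' mu) (H n') (p(Suc m := 0)) = RHSf la' mu n' (p(Suc m := 0))"
      by (rule Suc.IH[of la' mu "p(Suc m := 0)" n', OF pl' Suc.prems(2) p0 pb])
  qed
qed

lemma empty_part: "is_partition empty_partition"
  unfolding empty_partition_def by (rule partI) simp_all

lemma VSD_empty: "VSD k empty_partition = (if k = 0 then {empty_partition} else {})"
proof -
  have *: "mm = empty_partition \<and> k = 0" if "vertical_strip empty_partition mm k" for mm
  proof -
    have "part_subseteq mm empty_partition" "card (skew_cells empty_partition mm) = k"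
      using that unfolding vertical_strip_def by simp_all
    then have "mm = empty_partition" unfolding part_subseteq_def empty_partition_def by (simp add: fun_eq_iff)
    then show ?thesis using \<open>card (skew_cells empty_partition mm) = k\<close> cells_self by simp
  qed
  show ?thesis
  proof (cases "k = 0")
    case True
    have "VSD k empty_partition = {empty_partition}"
    proof
      show "VSD k empty_partition \<subseteq> {empty_partition}" unfolding VSD_def using * by blast
      show "{empty_partition} \<subseteq> VSD k empty_partition" unfolding VSD_def using vs_refl[OF empty_part] True by simp
    qed
    then show ?thesis using True by simp
  next
    case False
    have "VSD k empty_partition = {}" unfolding VSD_def using * False by blast
    then show ?thesis using False by simp
  qed
qed

lemma HSU_empty: "HSU n empty_partition = {row_partition n}"
proof -
  have e: "\<And>i. empty_partition i = 0" unfolding empty_partition_def by simp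
  have c: "int (card (skew_cells lp empty_partition)) = int (lp 0)" if "\<And>i. 1 \<le> i \<Longrightarrow> lp i = 0" for lp
    using card_cells_int[of empty_partition lp 1] that e by simp
  have "lp = row_partition n" if "horizontal_strip lp empty_partition n" for lp
  proof -
    have il: "interl lp empty_partition" and cn: "card (skew_cells lp empty_partition) = n"
      using hs_char[THEN iffD1, OF that] by simp_all
    have z: "\<And>i. 1 \<le> i \<Longrightarrow> lp i = 0"
    proof -
      fix i :: nat assume "1 \<le> i"
      then obtain j where "i = Suc j" by (cases i) auto
      have "lp (Suc j) \<le> empty_partition j" using il unfolding interl_def by blast
      then show "lp i = 0" using \<open>i = Suc j\<close> e by simp
    qed
    have "lp 0 = n" using c[OF z] cn by simp
    then show ?thesis unfolding row_partition_def using z by (auto simp: fun_eq_iff)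
  qed
  moreover have "horizontal_strip (row_partition n) empty_partition n"
  proof -
    have z: "\<And>i. 1 \<le> i \<Longrightarrow> row_partition n i = 0" unfolding row_partition_def by simp
    have "interl (row_partition n) empty_partition" unfolding interl_def row_partition_def e by simp
    moreover have "card (skew_cells (row_partition n) empty_partition) = n"
      using c[OF z] unfolding row_partition_def by simp
    ultimately show ?thesis unfolding hs_char using empty_part by simp
  qed
  ultimately show ?thesis unfolding HSU_def by blast
qed

lemma SK_p0: "p 0 \<noteq> 0 \<Longrightarrow> SK la mu p = 0"
proof -
  assume p0: "p 0 \<noteq> 0"
  have "tabs la mu p = {}"
  proof (rule equals0I)
    fix T assume T: "T \<in> tabs la mu p"
    then have "p 0 = card {c \<in> skew_cells la mu. T c = 0}" and pos: "\<forall>c \<in> skew_cells la mu. 1 \<le> T c"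
      unfolding tabs_def ssyt_def by blast+
    moreover have "{c \<in> skew_cells la mu. T c = 0} = {}" using pos by fastforce
    ultimately show False using p0 by simp
  qed
  then show ?thesis unfolding SK_def by simp
qed

lemma H_p0: "p 0 \<noteq> 0 \<Longrightarrow> H n p = 0" unfolding H_def by simp

lemma conv_p0:
  assumes "p 0 \<noteq> 0" "\<And>q. q 0 \<noteq> 0 \<Longrightarrow> f q = 0"
  shows "conv f (H n) p = 0"
  unfolding conv_alt
proof (rule sum.neutral, rule ballI)
  fix x assume "x \<in> pairs p"
  then have "fst x 0 + snd x 0 = p 0" unfolding pairs_def by (auto simp: case_prod_beta)
  then have "fst x 0 \<noteq> 0 \<or> snd x 0 \<noteq> 0" using assms(1) by auto
  then show "f (fst x) * H n (snd x) = 0"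
  proof
    assume "fst x 0 \<noteq> 0" then show ?thesis using assms(2)[of "fst x"] by simp
  next
    assume "snd x 0 \<noteq> 0" then show ?thesis using H_p0[of "snd x" n] by simp
  qed
qed

lemma SK_row: "SK (row_partition n) empty_partition p = H n p" if "\<And>i. m < i \<Longrightarrow> p i = 0"
proof (cases "p 0 = 0")
  case False then show ?thesis using SK_p0 H_p0 by simp
next
  case True
  have pe: "is_partition empty_partition" by (rule empty_part)
  have "conv (SK' empty_partition empty_partition) (H n) p = RHSf empty_partition empty_partition n p"
    by (rule main[where la=empty_partition and mu=empty_partition and p=p and m=m and n=n, OF pe pe True that])
  moreover have "SK' empty_partition empty_partition = (\<lambda>q. if q = (\<lambda>_. 0) then 1 else 0)"
    using SK'_empty by (simp add: fun_eq_iff)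
  moreover have "conv (\<lambda>q. if q = (\<lambda>_. 0) then 1 else 0) (H n) p = H n p" by (rule conv_unit[of m p, OF that])
  moreover have "RHSf empty_partition empty_partition n p = SK (row_partition n) empty_partition p"
  proof -
    have "RHSf empty_partition empty_partition n p = (\<Sum>k = 0..n. (-1::int) ^ k *
      (\<Sum>mm\<in>VSD k empty_partition. \<Sum>lp\<in>HSU (n - k) empty_partition. SK' lp mm p))"
      by (rule RHSf_alt)
    also have "\<dots> = (\<Sum>k = 0..n. if k = 0 then SK' (row_partition n) empty_partition p else 0)"
    proof (rule sum.cong[OF refl])
      fix k assume "k \<in> {0..n}"
      show "(-1::int) ^ k * (\<Sum>mm\<in>VSD k empty_partition. \<Sum>lp\<in>HSU (n - k) empty_partition. SK' lp mm p)
          = (if k = 0 then SK' (row_partition n) empty_partition p else 0)"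
        unfolding VSD_empty HSU_empty by simp
    qed
    also have "\<dots> = SK' (row_partition n) empty_partition p" by (simp add: sum.delta)
    also have "\<dots> = SK (row_partition n) empty_partition p"
      unfolding SK'_def part_subseteq_def empty_partition_def by simp
    finally show ?thesis .
  qed
  ultimately show ?thesis by simp
qed

lemma skew_schur_eq: "skew_schur la mu a = SK la mu (Poly_Mapping.lookup a)"
  unfolding skew_schur_def SK_def tabs_def by simp

lemma hsym_eq: "hsym n a = H n (Poly_Mapping.lookup a)"
  unfolding hsym_def H_def by (simp add: keys.rep_eq)

lemma sf_mult_eq:
  "sf_mult (\<lambda>a. F (Poly_Mapping.lookup a)) (\<lambda>a. G (Poly_Mapping.lookup a)) a = conv F G (Poly_Mapping.lookup a)"
  unfolding sf_mult_def conv_def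
proof (rule sum.reindex_bij_witness[where j = "\<lambda>(b, c). (Poly_Mapping.lookup b, Poly_Mapping.lookup c)"
      and i = "\<lambda>(q1, q2). (Abs_poly_mapping q1, Abs_poly_mapping q2)"])
  fix x assume x: "x \<in> {(b, c). b + c = a}"
  obtain b c where e: "x = (b, c)" by (cases x)
  have bc: "b + c = a" using x e by simp
  show "(\<lambda>(q1, q2). (Abs_poly_mapping q1, Abs_poly_mapping q2)) ((\<lambda>(b, c). (Poly_Mapping.lookup b, Poly_Mapping.lookup c)) x) = x"
    using e by simp
  show "(\<lambda>(b, c). (Poly_Mapping.lookup b, Poly_Mapping.lookup c)) x \<in> pairs (Poly_Mapping.lookup a)"
    using e bc unfolding pairs_def by (auto simp: lookup_add)
  show "(case (\<lambda>(b, c). (Poly_Mapping.lookup b, Poly_Mapping.lookup c)) x of (q1, q2) \<Rightarrow> F q1 * G q2)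
      = (case x of (b, c) \<Rightarrow> F (Poly_Mapping.lookup b) * G (Poly_Mapping.lookup c))" using e by simp
next
  fix y assume y: "y \<in> pairs (Poly_Mapping.lookup a)"
  obtain q1 q2 where e: "y = (q1, q2)" by (cases y)
  have q: "\<And>i. q1 i + q2 i = Poly_Mapping.lookup a i" using y e unfolding pairs_def by simp
  have "{i. q1 i \<noteq> 0} \<subseteq> {i. Poly_Mapping.lookup a i \<noteq> 0}"
  proof
    fix i assume "i \<in> {i. q1 i \<noteq> 0}"
    then have "q1 i \<noteq> 0" by simp
    then have "Poly_Mapping.lookup a i \<noteq> 0" using q[of i] by simp
    then show "i \<in> {i. Poly_Mapping.lookup a i \<noteq> 0}" by simp
  qed
  then have f1: "finite {i. q1 i \<noteq> 0}" by (rule rev_finite_subset[OF finite_lookup[of a]])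
  have "{i. q2 i \<noteq> 0} \<subseteq> {i. Poly_Mapping.lookup a i \<noteq> 0}"
  proof
    fix i assume "i \<in> {i. q2 i \<noteq> 0}"
    then have "q2 i \<noteq> 0" by simp
    then have "Poly_Mapping.lookup a i \<noteq> 0" using q[of i] by simp
    then show "i \<in> {i. Poly_Mapping.lookup a i \<noteq> 0}" by simp
  qed
  then have f2: "finite {i. q2 i \<noteq> 0}" by (rule rev_finite_subset[OF finite_lookup[of a]])
  have l1: "Poly_Mapping.lookup (Abs_poly_mapping q1) = q1" by (rule lookup_Abs_poly_mapping[OF f1])
  have l2: "Poly_Mapping.lookup (Abs_poly_mapping q2) = q2" by (rule lookup_Abs_poly_mapping[OF f2])
  show "(\<lambda>(b, c). (Poly_Mapping.lookup b, Poly_Mapping.lookup c)) ((\<lambda>(q1, q2). (Abs_poly_mapping q1, Abs_poly_mapping q2)) y) = y"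
    using e l1 l2 by simp
  have "Abs_poly_mapping q1 + Abs_poly_mapping q2 = a"
    by (rule poly_mapping_eqI) (simp add: lookup_add l1 l2 q)
  then show "(\<lambda>(q1, q2). (Abs_poly_mapping q1, Abs_poly_mapping q2)) y \<in> {(b, c). b + c = a}"
    using e by simp
qed

theorem theorem3p2:
  fixes la mu :: "nat \<Rightarrow> nat" and n :: nat
  assumes "is_partition la" and "is_partition mu" and "part_subseteq mu la" and "0 < n"
  shows "sf_mult (skew_schur la mu) (skew_schur (row_partition n) empty_partition) =
           sf_mult (skew_schur la mu) (hsym n)
       \<and> sf_mult (skew_schur la mu) (hsym n) =
           (\<lambda>a. \<Sum>k = 0..n. (-1) ^ k *
              (\<Sum>(lp, mm) \<in> {(lp, mm). horizontal_strip lp la (n - k) \<and> vertical_strip mu mm k}.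
                  skew_schur lp mm a))"
proof
  have bnd: "\<exists>m. \<forall>i. m < i \<longrightarrow> Poly_Mapping.lookup a i = 0" for a :: "nat \<Rightarrow>\<^sub>0 nat"
  proof -
    obtain N where "\<And>i. N \<le> i \<Longrightarrow> Poly_Mapping.lookup a i = 0"
      using fin_supp_bound[OF finite_lookup[of a]] by blast
    then have "\<forall>i. N < i \<longrightarrow> Poly_Mapping.lookup a i = 0" by simp
    then show ?thesis by blast
  qed
  have row: "skew_schur (row_partition n) empty_partition = hsym n"
  proof
    fix a :: "nat \<Rightarrow>\<^sub>0 nat"
    obtain m where m: "\<forall>i. m < i \<longrightarrow> Poly_Mapping.lookup a i = 0" using bnd by blast
    show "skew_schur (row_partition n) empty_partition a = hsym n a"
      unfolding skew_schur_eq hsym_eq using SK_row[of m "Poly_Mapping.lookup a" n] m by simp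
  qed
  show "sf_mult (skew_schur la mu) (skew_schur (row_partition n) empty_partition) = sf_mult (skew_schur la mu) (hsym n)"
    unfolding row ..
  show "sf_mult (skew_schur la mu) (hsym n) =
           (\<lambda>a. \<Sum>k = 0..n. (-1) ^ k *
              (\<Sum>(lp, mm) \<in> {(lp, mm). horizontal_strip lp la (n - k) \<and> vertical_strip mu mm k}.
                  skew_schur lp mm a))"
  proof
    fix a :: "nat \<Rightarrow>\<^sub>0 nat"
    let ?p = "Poly_Mapping.lookup a"
    obtain m where m: "\<And>i. m < i \<Longrightarrow> ?p i = 0" using bnd by blast
    have ss: "skew_schur la mu = (\<lambda>a. SK' la mu (Poly_Mapping.lookup a))"
      using assms(3) unfolding SK'_def by (simp add: skew_schur_eq fun_eq_iff)
    have hh: "hsym n = (\<lambda>a. H n (Poly_Mapping.lookup a))" by (simp add: hsym_eq fun_eq_iff)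
    have lhs: "sf_mult (skew_schur la mu) (hsym n) a = conv (SK' la mu) (H n) ?p"
      unfolding ss hh by (rule sf_mult_eq)
    have inner: "(\<Sum>(lp, mm) \<in> {(lp, mm). horizontal_strip lp la (n - k) \<and> vertical_strip mu mm k}. skew_schur lp mm a)
        = (\<Sum>(lp, mm) \<in> {(lp, mm). horizontal_strip lp la (n - k) \<and> vertical_strip mu mm k}. SK' lp mm ?p)" for k
    proof (rule sum.cong[OF refl])
      fix x assume "x \<in> {(lp, mm). horizontal_strip lp la (n - k) \<and> vertical_strip mu mm k}"
      then obtain lp mm where e: "x = (lp, mm)" "horizontal_strip lp la (n - k)" "vertical_strip mu mm k" by auto
      have s1: "part_subseteq la lp" using e(2) unfolding horizontal_strip_def by simp
      have s2: "part_subseteq mm mu" using e(3) unfolding vertical_strip_def by simp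
      have "part_subseteq mm lp" unfolding part_subseteq_def
      proof
        fix i have "mm i \<le> mu i" "mu i \<le> la i" "la i \<le> lp i"
          using s1 s2 assms(3) unfolding part_subseteq_def by simp_all
        then show "mm i \<le> lp i" by linarith
      qed
      then show "(case x of (lp, mm) \<Rightarrow> skew_schur lp mm a) = (case x of (lp, mm) \<Rightarrow> SK' lp mm ?p)"
        using e(1) unfolding SK'_def skew_schur_eq by simp
    qed
    have rhs: "(\<Sum>k = 0..n. (-1) ^ k *
              (\<Sum>(lp, mm) \<in> {(lp, mm). horizontal_strip lp la (n - k) \<and> vertical_strip mu mm k}.
                  skew_schur lp mm a)) = RHSf la mu n ?p"
      unfolding RHSf_def inner by simp
    show "sf_mult (skew_schur la mu) (hsym n) a = (\<Sum>k = 0..n. (-1) ^ k *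
              (\<Sum>(lp, mm) \<in> {(lp, mm). horizontal_strip lp la (n - k) \<and> vertical_strip mu mm k}.
                  skew_schur lp mm a))"
    proof (cases "?p 0 = 0")
      case True
      show ?thesis unfolding lhs rhs by (rule main[where la=la and mu=mu and p="?p" and m=m and n=n, OF assms(1,2) True m])
    next
      case False
      have sk0: "SK' lp mm ?p = 0" for lp mm unfolding SK'_def using SK_p0[of ?p lp mm] False by simp
      have "conv (SK' la mu) (H n) ?p = 0"
        by (rule conv_p0[where p="?p" and f="SK' la mu" and n=n, OF False]) (simp add: SK'_def SK_p0)
      moreover have "RHSf la mu n ?p = 0"
        unfolding RHSf_def sk0 by simp
      ultimately show ?thesis unfolding lhs rhs by simp
    qed
  qed
qed

end
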